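(* Let $\mathcal{S}$ be an inverse semigroupoid, $X$ a partially ordered set and $\theta$ an ordered partial action of $\mathcal{S}$ on $X$, and let $(\eta,E,i)$ be given by the globalization construction. Then the relation on $E$ defined by $[s,x]\leqslant[t,y]$ iff there exist $(r,y')\in D$ and $x'\in X$ with $(r,y')\approx(t,y)$, $x'\leqslant y'$ and $(r,x')\approx(s,x)$, is a well-defined partial order on $E$. Moreover, with this order each $E_s$ is an order ideal of $E$ and each $\eta_s$ is order preserving, so that $\eta$ is an ordered global action of $\mathcal{S}$ on $E$.
   Context: Inverse semigroupoid: arrows $\mathcal{S}$, objects $\mathcal{S}^{(0)}$, maps $d,c$, associative multiplication on $\mathcal{S}^{(2)}=\{(s,t):d(s)=c(t)\}$ with $d(st)=d(t)$, $c(st)=c(s)$, and unique $s^*$ with $ss^*s=s$, $s^*ss^*=s^*$; $E(\mathcal{S})$ = idempotents; natural partial order $s\leqslant t$ (for parallel $s,t$) iff $s=te$ for an idempotent $e$ with $(t,e)\in\mathcal{S}^{(2)}$. A partial action of $\mathcal{S}$ on a set $X$ is a pair $(\{X_s\},\{\theta_s\})$ of subsets $X_s\subseteq X$ and maps $\theta_s:X_{s^*}\to X_s$ such that: each $\theta_s$ is a bijection with $\theta_s^{-1}=\theta_{s^*}$ and $X=\bigcup_s X_s$; $\theta_s\circ\theta_t\subseteq\theta_{st}$ as partial maps for $(s,t)\in\mathcal{S}^{(2)}$; $X_s\subseteq X_t$ whenever $s\leqslant t$. It is global if $\theta_s\circ\theta_t=\theta_{st}$ for all $(s,t)\in\mathcal{S}^{(2)}$.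 When $X$ is a poset, it is an ordered partial action if each $X_s$ is an order ideal of $X$ and each $\theta_s$ is an order isomorphism. Globalization construction: let $D=\{(s,x)\in\mathcal{S}\times X: x\in X_{s^*s}\}$. Define $(s,x)\sim(t,y)$ on $D$ iff either (R1) $(t^*,s)\in\mathcal{S}^{(2)}$, $x\in X_{s^*t}$ and $\theta_{t^*s}(x)=y$; or (R2) $s,t\in E(\mathcal{S})$ and $x=y$. Let $\approx$ be the equivalence relation on $D$ generated by $\sim$, $E=D/{\approx}$, and $[s,x]$ the class of $(s,x)$. For $s\in\mathcal{S}$ put $D_s=\{(p,x)\in D:(s^*,p)\in\mathcal{S}^{(2)},\ x\in X_{p^*ss^*p}\}$, $E_s=\{[p,x]:(p,x)\in D_s\}$, and $\eta_s:E_{s^*}\to E_s$, $\eta_s([p,x])=[sp,x]$ for $(p,x)\in D_{s^*}$. Define $i:X\to E$ by $i(x)=[e,x]$ for any $e\in E(\mathcal{S})$ with $x\in X_e$. (These are well defined, $\eta=(\{E_s\},\{\eta_s\})$ is a global action of $\mathcal{S}$ on $E$, and $i$ is injective and equivariant.) *)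

theory Defs
  imports Main
begin

text \<open>A semigroupoid is given by a carrier set of arrows, domain and codomain maps
into a type of objects, and a multiplication which is only meaningful on
composable pairs (its values elsewhere are irrelevant).\<close>

record ('a, 'o) semigroupoid =
  arr  :: "'a set"
  dom  :: "'a \<Rightarrow> 'o"
  cod  :: "'a \<Rightarrow> 'o"
  mult :: "'a \<Rightarrow> 'a \<Rightarrow> 'a"

definition comp :: "('a, 'o, 'z) semigroupoid_scheme \<Rightarrow> 'a \<Rightarrow> 'a \<Rightarrow> bool" where
  "comp S s t \<longleftrightarrow> s \<in> arr S \<and> t \<in> arr S \<and> dom S s = cod S t"

definition is_semigroupoid :: "('a, 'o, 'z) semigroupoid_scheme \<Rightarrow> bool" where
  "is_semigroupoid S \<longleftrightarrow>
     (\<forall>s t. comp S s t \<longrightarrow> mult S s t \<in> arr S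
            \<and> dom S (mult S s t) = dom S t \<and> cod S (mult S s t) = cod S s)
   \<and> (\<forall>s t u. comp S s t \<and> comp S t u \<longrightarrow>
            mult S (mult S s t) u = mult S s (mult S t u))"

definition is_inv :: "('a, 'o, 'z) semigroupoid_scheme \<Rightarrow> 'a \<Rightarrow> 'a \<Rightarrow> bool" where
  "is_inv S s t \<longleftrightarrow> t \<in> arr S \<and> comp S s t \<and> comp S t s
     \<and> mult S (mult S s t) s = s \<and> mult S (mult S t s) t = t"

definition inverse_semigroupoid :: "('a, 'o, 'z) semigroupoid_scheme \<Rightarrow> bool" where
  "inverse_semigroupoid S \<longleftrightarrow> is_semigroupoid S \<and> (\<forall>s\<in>arr S. \<exists>!t. is_inv S s t)"

definition star :: "('a, 'o, 'z) semigroupoid_scheme \<Rightarrow> 'a \<Rightarrow> 'a" where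
  "star S s = (THE t. is_inv S s t)"

definition idem :: "('a, 'o, 'z) semigroupoid_scheme \<Rightarrow> 'a \<Rightarrow> bool" where
  "idem S e \<longleftrightarrow> e \<in> arr S \<and> comp S e e \<and> mult S e e = e"

definition nat_le :: "('a, 'o, 'z) semigroupoid_scheme \<Rightarrow> 'a \<Rightarrow> 'a \<Rightarrow> bool" where
  "nat_le S s t \<longleftrightarrow> s \<in> arr S \<and> t \<in> arr S \<and> dom S s = dom S t \<and> cod S s = cod S t
     \<and> (\<exists>e. idem S e \<and> comp S t e \<and> s = mult S t e)"

definition poset :: "'x set \<Rightarrow> ('x \<Rightarrow> 'x \<Rightarrow> bool) \<Rightarrow> bool" where
  "poset X le \<longleftrightarrow> (\<forall>x\<in>X. le x x)
     \<and> (\<forall>x\<in>X. \<forall>y\<in>X. le x y \<and> le y x \<longrightarrow> x = y)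
     \<and> (\<forall>x\<in>X. \<forall>y\<in>X. \<forall>z\<in>X. le x y \<and> le y z \<longrightarrow> le x z)"

definition order_ideal :: "'x set \<Rightarrow> ('x \<Rightarrow> 'x \<Rightarrow> bool) \<Rightarrow> 'x set \<Rightarrow> bool" where
  "order_ideal X le I \<longleftrightarrow> I \<subseteq> X \<and> (\<forall>x\<in>I. \<forall>y\<in>X. le y x \<longrightarrow> y \<in> I)"

definition order_iso :: "('x \<Rightarrow> 'x \<Rightarrow> bool) \<Rightarrow> ('x \<Rightarrow> 'x) \<Rightarrow> 'x set \<Rightarrow> 'x set \<Rightarrow> bool" where
  "order_iso le f A B \<longleftrightarrow> bij_betw f A B \<and> (\<forall>x\<in>A. \<forall>y\<in>A. le x y \<longleftrightarrow> le (f x) (f y))"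

definition partial_action ::
  "('a, 'o, 'z) semigroupoid_scheme \<Rightarrow> 'x set \<Rightarrow> ('a \<Rightarrow> 'x set) \<Rightarrow> ('a \<Rightarrow> 'x \<Rightarrow> 'x) \<Rightarrow> bool" where
  "partial_action S X Xs \<theta> \<longleftrightarrow>
     (\<forall>s\<in>arr S. Xs s \<subseteq> X)
   \<and> X = (\<Union>s\<in>arr S. Xs s)
   \<and> (\<forall>s\<in>arr S. bij_betw (\<theta> s) (Xs (star S s)) (Xs s)
        \<and> (\<forall>x\<in>Xs (star S s). \<theta> (star S s) (\<theta> s x) = x)
        \<and> (\<forall>y\<in>Xs s. \<theta> s (\<theta> (star S s) y) = y))
   \<and> (\<forall>s t x. comp S s t \<and> x \<in> Xs (star S t) \<and> \<theta> t x \<in> Xs (star S s) \<longrightarrow>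
        x \<in> Xs (star S (mult S s t)) \<and> \<theta> (mult S s t) x = \<theta> s (\<theta> t x))
   \<and> (\<forall>s t. nat_le S s t \<longrightarrow> Xs s \<subseteq> Xs t)"

definition global_action ::
  "('a, 'o, 'z) semigroupoid_scheme \<Rightarrow> 'x set \<Rightarrow> ('a \<Rightarrow> 'x set) \<Rightarrow> ('a \<Rightarrow> 'x \<Rightarrow> 'x) \<Rightarrow> bool" where
  "global_action S X Xs \<theta> \<longleftrightarrow> partial_action S X Xs \<theta>
   \<and> (\<forall>s t. comp S s t \<longrightarrow>
        {x \<in> Xs (star S t). \<theta> t x \<in> Xs (star S s)} = Xs (star S (mult S s t))
        \<and> (\<forall>x\<in>Xs (star S (mult S s t)). \<theta> (mult S s t) x = \<theta> s (\<theta> t x)))"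

definition ordered_action ::
  "('a, 'o, 'z) semigroupoid_scheme \<Rightarrow> 'x set \<Rightarrow> ('x \<Rightarrow> 'x \<Rightarrow> bool)
     \<Rightarrow> ('a \<Rightarrow> 'x set) \<Rightarrow> ('a \<Rightarrow> 'x \<Rightarrow> 'x) \<Rightarrow> bool" where
  "ordered_action S X le Xs \<theta> \<longleftrightarrow>
     (\<forall>s\<in>arr S. order_ideal X le (Xs s) \<and> order_iso le (\<theta> s) (Xs (star S s)) (Xs s))"

definition ordered_partial_action where
  "ordered_partial_action S X le Xs \<theta> \<longleftrightarrow>
     poset X le \<and> partial_action S X Xs \<theta> \<and> ordered_action S X le Xs \<theta>"

definition ordered_global_action where
  "ordered_global_action S X le Xs \<theta> \<longleftrightarrow>
     poset X le \<and> global_action S X Xs \<theta> \<and> ordered_action S X le Xs \<theta>"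

definition glob_D :: "('a, 'o, 'z) semigroupoid_scheme \<Rightarrow> ('a \<Rightarrow> 'x set) \<Rightarrow> ('a \<times> 'x) set" where
  "glob_D S Xs = {(s, x). s \<in> arr S \<and> x \<in> Xs (mult S (star S s) s)}"

definition glob_sim ::
  "('a, 'o, 'z) semigroupoid_scheme \<Rightarrow> ('a \<Rightarrow> 'x set) \<Rightarrow> ('a \<Rightarrow> 'x \<Rightarrow> 'x) \<Rightarrow> ('a \<times> 'x) rel" where
  "glob_sim S Xs \<theta> = {((s, x), (t, y)). (s, x) \<in> glob_D S Xs \<and> (t, y) \<in> glob_D S Xs \<and>
     ((comp S (star S t) s \<and> x \<in> Xs (mult S (star S s) t) \<and> \<theta> (mult S (star S t) s) x = y)
      \<or> (idem S s \<and> idem S t \<and> x = y))}"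

definition glob_approx ::
  "('a, 'o, 'z) semigroupoid_scheme \<Rightarrow> ('a \<Rightarrow> 'x set) \<Rightarrow> ('a \<Rightarrow> 'x \<Rightarrow> 'x) \<Rightarrow> ('a \<times> 'x) rel" where
  "glob_approx S Xs \<theta> =
     (glob_sim S Xs \<theta> \<union> (glob_sim S Xs \<theta>)\<inverse>)\<^sup>* \<inter> (glob_D S Xs \<times> glob_D S Xs)"

definition glob_E ::
  "('a, 'o, 'z) semigroupoid_scheme \<Rightarrow> ('a \<Rightarrow> 'x set) \<Rightarrow> ('a \<Rightarrow> 'x \<Rightarrow> 'x) \<Rightarrow> ('a \<times> 'x) set set" where
  "glob_E S Xs \<theta> = glob_D S Xs // glob_approx S Xs \<theta>"

definition glob_cls ::
  "('a, 'o, 'z) semigroupoid_scheme \<Rightarrow> ('a \<Rightarrow> 'x set) \<Rightarrow> ('a \<Rightarrow> 'x \<Rightarrow> 'x) \<Rightarrow> 'a \<Rightarrow> 'x \<Rightarrow> ('a \<times> 'x) set" where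
  "glob_cls S Xs \<theta> s x = glob_approx S Xs \<theta> `` {(s, x)}"

definition glob_Ds :: "('a, 'o, 'z) semigroupoid_scheme \<Rightarrow> ('a \<Rightarrow> 'x set) \<Rightarrow> 'a \<Rightarrow> ('a \<times> 'x) set" where
  "glob_Ds S Xs s = {(p, x). (p, x) \<in> glob_D S Xs \<and> comp S (star S s) p \<and>
      x \<in> Xs (mult S (star S p) (mult S (mult S s (star S s)) p))}"

definition glob_Es ::
  "('a, 'o, 'z) semigroupoid_scheme \<Rightarrow> ('a \<Rightarrow> 'x set) \<Rightarrow> ('a \<Rightarrow> 'x \<Rightarrow> 'x) \<Rightarrow> 'a \<Rightarrow> ('a \<times> 'x) set set" where
  "glob_Es S Xs \<theta> s = (\<lambda>(p, x). glob_cls S Xs \<theta> p x) ` glob_Ds S Xs s"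

definition glob_eta ::
  "('a, 'o, 'z) semigroupoid_scheme \<Rightarrow> ('a \<Rightarrow> 'x set) \<Rightarrow> ('a \<Rightarrow> 'x \<Rightarrow> 'x) \<Rightarrow> 'a
     \<Rightarrow> ('a \<times> 'x) set \<Rightarrow> ('a \<times> 'x) set" where
  "glob_eta S Xs \<theta> s C =
     (let (p, x) = (SOME (p, x). (p, x) \<in> glob_Ds S Xs (star S s) \<and> C = glob_cls S Xs \<theta> p x)
      in glob_cls S Xs \<theta> (mult S s p) x)"

definition glob_le_rep ::
  "('a, 'o, 'z) semigroupoid_scheme \<Rightarrow> 'x set \<Rightarrow> ('x \<Rightarrow> 'x \<Rightarrow> bool) \<Rightarrow> ('a \<Rightarrow> 'x set)
     \<Rightarrow> ('a \<Rightarrow> 'x \<Rightarrow> 'x) \<Rightarrow> 'a \<Rightarrow> 'x \<Rightarrow> 'a \<Rightarrow> 'x \<Rightarrow> bool" where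
  "glob_le_rep S X le Xs \<theta> s x t y \<longleftrightarrow>
     (\<exists>r y' x'. (r, y') \<in> glob_D S Xs \<and> x' \<in> X \<and>
        ((r, y'), (t, y)) \<in> glob_approx S Xs \<theta> \<and> le x' y' \<and>
        ((r, x'), (s, x)) \<in> glob_approx S Xs \<theta>)"

definition glob_le ::
  "('a, 'o, 'z) semigroupoid_scheme \<Rightarrow> 'x set \<Rightarrow> ('x \<Rightarrow> 'x \<Rightarrow> bool) \<Rightarrow> ('a \<Rightarrow> 'x set)
     \<Rightarrow> ('a \<Rightarrow> 'x \<Rightarrow> 'x) \<Rightarrow> ('a \<times> 'x) set \<Rightarrow> ('a \<times> 'x) set \<Rightarrow> bool" where
  "glob_le S X le Xs \<theta> C1 C2 \<longleftrightarrow>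
     (\<exists>s x t y. (s, x) \<in> glob_D S Xs \<and> (t, y) \<in> glob_D S Xs \<and>
        C1 = glob_cls S Xs \<theta> s x \<and> C2 = glob_cls S Xs \<theta> t y \<and>
        glob_le_rep S X le Xs \<theta> s x t y)"

end

theory Submission
  imports Defs
begin


locale isg =
  fixes S :: "('a,'o,'z) semigroupoid_scheme"
  assumes isg: "inverse_semigroupoid S"
begin

abbreviation m :: "'a \<Rightarrow> 'a \<Rightarrow> 'a" (infixr "\<cdot>" 70) where "s \<cdot> t \<equiv> mult S s t"
abbreviation iv :: "'a \<Rightarrow> 'a" where "iv s \<equiv> star S s"
abbreviation A where "A \<equiv> arr S"
abbreviation dm where "dm \<equiv> dom S"
abbreviation cd where "cd \<equiv> cod S"

lemma sg: "is_semigroupoid S" using isg unfolding inverse_semigroupoid_def by auto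

lemma mult_closed[simp]: "s \<in> A \<Longrightarrow> t \<in> A \<Longrightarrow> dm s = cd t \<Longrightarrow> s \<cdot> t \<in> A"
  using sg unfolding is_semigroupoid_def comp_def by blast
lemma dom_mult[simp]: "s \<in> A \<Longrightarrow> t \<in> A \<Longrightarrow> dm s = cd t \<Longrightarrow> dm (s \<cdot> t) = dm t"
  using sg unfolding is_semigroupoid_def comp_def by blast
lemma cod_mult[simp]: "s \<in> A \<Longrightarrow> t \<in> A \<Longrightarrow> dm s = cd t \<Longrightarrow> cd (s \<cdot> t) = cd s"
  using sg unfolding is_semigroupoid_def comp_def by blast
lemma assoc[simp]: "s \<in> A \<Longrightarrow> t \<in> A \<Longrightarrow> u \<in> A \<Longrightarrow> dm s = cd t \<Longrightarrow> dm t = cd u \<Longrightarrow>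
   (s \<cdot> t) \<cdot> u = s \<cdot> (t \<cdot> u)"
  using sg unfolding is_semigroupoid_def comp_def by blast

lemma inv_ex: "s \<in> A \<Longrightarrow> is_inv S s (iv s)"
  using isg unfolding inverse_semigroupoid_def star_def by (metis theI')
lemma inv_unique: "s \<in> A \<Longrightarrow> is_inv S s t \<Longrightarrow> iv s = t"
  using isg inv_ex unfolding inverse_semigroupoid_def by blast

lemma inv_ex': "s \<in> A \<Longrightarrow> iv s \<in> A \<and> dm s = cd (iv s) \<and> dm (iv s) = cd s
    \<and> (s \<cdot> iv s) \<cdot> s = s \<and> (iv s \<cdot> s) \<cdot> iv s = iv s"
  using inv_ex[of s] unfolding is_inv_def comp_def by simp
lemma star_arr[simp]: "s \<in> A \<Longrightarrow> iv s \<in> A"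
  using inv_ex'[of s] by simp
lemma dom_star[simp]: "s \<in> A \<Longrightarrow> dm (iv s) = cd s"
  using inv_ex'[of s] by simp
lemma cod_star[simp]: "s \<in> A \<Longrightarrow> cd (iv s) = dm s"
  using inv_ex'[of s] by simp
lemma sss[simp]: "s \<in> A \<Longrightarrow> s \<cdot> iv s \<cdot> s = s"
  using inv_ex'[of s] assoc[of s "iv s" s] by simp
lemma sss'[simp]: "s \<in> A \<Longrightarrow> iv s \<cdot> s \<cdot> iv s = iv s"
  using inv_ex'[of s] assoc[of "iv s" s "iv s"] by simp
lemma sss_t[simp]: "s \<in> A \<Longrightarrow> u \<in> A \<Longrightarrow> dm s = cd u \<Longrightarrow> s \<cdot> iv s \<cdot> s \<cdot> u = s \<cdot> u"
  using assoc[of "s \<cdot> iv s" s u] by simp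
lemma sss_t'[simp]: "s \<in> A \<Longrightarrow> u \<in> A \<Longrightarrow> cd s = cd u \<Longrightarrow> iv s \<cdot> s \<cdot> iv s \<cdot> u = iv s \<cdot> u"
  using assoc[of "iv s \<cdot> s" "iv s" u] by simp

lemma star_star[simp]: "s \<in> A \<Longrightarrow> iv (iv s) = s"
  apply (rule inv_unique) apply simp
  unfolding is_inv_def comp_def by simp

lemma idem_iff: "idem S e \<longleftrightarrow> e \<in> A \<and> dm e = cd e \<and> e \<cdot> e = e"
  unfolding idem_def comp_def by auto

lemma idem_star: "idem S e \<Longrightarrow> iv e = e"
  by (rule inv_unique) (auto simp: idem_iff is_inv_def comp_def)

lemma idem_tail: "idem S e \<Longrightarrow> u \<in> A \<Longrightarrow> dm e = cd u \<Longrightarrow> e \<cdot> e \<cdot> u = e \<cdot> u"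
  unfolding idem_iff by (metis assoc)

lemma idem_ss[simp]: "s \<in> A \<Longrightarrow> idem S (s \<cdot> iv s)"
  unfolding idem_iff by simp
lemma idem_ss'[simp]: "s \<in> A \<Longrightarrow> idem S (iv s \<cdot> s)"
  unfolding idem_iff by simp

lemma idem_commute:
  assumes e: "idem S e" and f: "idem S f" and d: "dm e = dm f"
  shows "e \<cdot> f = f \<cdot> e"
proof -
  have eA: "e \<in> A" and fA: "f \<in> A" and de: "dm e = cd e" and df: "dm f = cd f"
    and ee: "e \<cdot> e = e" and ff: "f \<cdot> f = f" using e f by (auto simp: idem_iff)
  have eet: "\<And>u. u \<in> A \<Longrightarrow> cd u = dm e \<Longrightarrow> e \<cdot> e \<cdot> u = e \<cdot> u" using idem_tail e by auto
  have fft: "\<And>u. u \<in> A \<Longrightarrow> cd u = dm e \<Longrightarrow> f \<cdot> f \<cdot> u = f \<cdot> u" using idem_tail f d by auto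
  have idp: "idem S (e \<cdot> f)" if e: "idem S e" and f: "idem S f" and d: "dm e = dm f" for e f
  proof -
    have eA: "e \<in> A" and fA: "f \<in> A" and de: "dm e = cd e" and df: "dm f = cd f"
      and ee: "e \<cdot> e = e" and ff: "f \<cdot> f = f" using e f by (auto simp: idem_iff)
    have eet: "\<And>u. u \<in> A \<Longrightarrow> cd u = dm e \<Longrightarrow> e \<cdot> e \<cdot> u = e \<cdot> u" using idem_tail e by auto
    have fft: "\<And>u. u \<in> A \<Longrightarrow> cd u = dm e \<Longrightarrow> f \<cdot> f \<cdot> u = f \<cdot> u" using idem_tail f d by auto
    define x where "x = iv (e \<cdot> f)"
    have efA: "e \<cdot> f \<in> A" using eA fA de df d by simp
    have xA: "x \<in> A" and dx: "dm x = dm e" and cx: "cd x = dm e"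
      using efA eA fA de df d by (auto simp: x_def)
    have i1: "e \<cdot> f \<cdot> x \<cdot> e \<cdot> f = e \<cdot> f"
      using sss[OF efA] eA fA xA de df d dx cx by (simp add: x_def del: sss)
    have i2: "x \<cdot> e \<cdot> f \<cdot> x = x"
      using sss'[OF efA] eA fA xA de df d dx cx by (simp add: x_def del: sss')
    have i2t: "x \<cdot> e \<cdot> f \<cdot> x \<cdot> e = x \<cdot> e"
      using i2 eA fA xA de df d dx cx by (metis assoc mult_closed dom_mult cod_mult)
    have "is_inv S (e \<cdot> f) (f \<cdot> x \<cdot> e)"
      unfolding is_inv_def comp_def
      using eA fA xA de df d dx cx i1 i2t eet fft ee ff by simp
    hence x1: "x = f \<cdot> x \<cdot> e" using inv_unique efA x_def by blast
    have "x \<cdot> x = x"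
    proof -
      have "x \<cdot> x = (f \<cdot> x \<cdot> e) \<cdot> (f \<cdot> x \<cdot> e)" using x1 by simp
      also have "\<dots> = f \<cdot> (x \<cdot> e \<cdot> f \<cdot> x \<cdot> e)"
        using eA fA xA de df d dx cx by simp
      also have "\<dots> = f \<cdot> x \<cdot> e" using i2t by simp
      finally show ?thesis using x1 by simp
    qed
    hence "idem S x" using xA dx cx by (simp add: idem_iff)
    hence "iv x = x" by (rule idem_star)
    hence "e \<cdot> f = x" using star_star[OF efA] x_def by simp
    thus ?thesis using \<open>idem S x\<close> by simp
  qed
  have ef: "idem S (e \<cdot> f)" using idp e f d by blast
  have fe: "idem S (f \<cdot> e)" using idp e f d by metis
  have efef: "e \<cdot> f \<cdot> e \<cdot> f = e \<cdot> f" using ef eA fA de df d unfolding idem_iff by simp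
  have fefe: "f \<cdot> e \<cdot> f \<cdot> e = f \<cdot> e" using fe eA fA de df d unfolding idem_iff by simp
  have "is_inv S (e \<cdot> f) (f \<cdot> e)"
    unfolding is_inv_def comp_def using eA fA de df d eet fft ee ff efef fefe
    by simp
  hence "iv (e \<cdot> f) = f \<cdot> e" using inv_unique eA fA de df d by simp
  thus ?thesis using idem_star[OF ef] by simp
qed


lemma star_mult[simp]: "s \<in> A \<Longrightarrow> t \<in> A \<Longrightarrow> dm s = cd t \<Longrightarrow> iv (s \<cdot> t) = iv t \<cdot> iv s"
proof -
  assume sA: "s \<in> A" and tA: "t \<in> A" and d: "dm s = cd t"
  have c: "iv s \<cdot> s \<cdot> t \<cdot> iv t = t \<cdot> iv t \<cdot> iv s \<cdot> s"
    using idem_commute[of "iv s \<cdot> s" "t \<cdot> iv t"] sA tA d by simp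
  have e1: "s \<cdot> t \<cdot> iv t \<cdot> iv s \<cdot> s \<cdot> t = s \<cdot> t"
  proof -
    have "s \<cdot> t \<cdot> iv t \<cdot> iv s \<cdot> s \<cdot> t = s \<cdot> (t \<cdot> iv t \<cdot> iv s \<cdot> s) \<cdot> t"
      using sA tA d by simp
    also have "\<dots> = s \<cdot> (iv s \<cdot> s \<cdot> t \<cdot> iv t) \<cdot> t" using c by simp
    also have "\<dots> = s \<cdot> t" using sA tA d by simp
    finally show ?thesis .
  qed
  have e2: "iv t \<cdot> iv s \<cdot> s \<cdot> t \<cdot> iv t \<cdot> iv s = iv t \<cdot> iv s"
  proof -
    have "iv t \<cdot> iv s \<cdot> s \<cdot> t \<cdot> iv t \<cdot> iv s = iv t \<cdot> (iv s \<cdot> s \<cdot> t \<cdot> iv t) \<cdot> iv s"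
      using sA tA d by simp
    also have "\<dots> = iv t \<cdot> (t \<cdot> iv t \<cdot> iv s \<cdot> s) \<cdot> iv s" using c by simp
    also have "\<dots> = iv t \<cdot> iv s" using sA tA d by simp
    finally show ?thesis .
  qed
  have "is_inv S (s \<cdot> t) (iv t \<cdot> iv s)"
    unfolding is_inv_def comp_def using sA tA d e1 e2 by simp
  thus ?thesis using inv_unique sA tA d by simp
qed

lemma comm_tail:
  assumes e: "idem S e" and f: "idem S f" and d: "dm e = dm f" and u: "u \<in> A" "cd u = dm e"
  shows "e \<cdot> f \<cdot> u = f \<cdot> e \<cdot> u"
proof -
  have "e \<cdot> f \<cdot> u = (e \<cdot> f) \<cdot> u" using e f d u by (simp add: idem_iff)
  also have "\<dots> = (f \<cdot> e) \<cdot> u" using idem_commute[OF e f d] by simp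
  also have "\<dots> = f \<cdot> e \<cdot> u" using e f d u by (simp add: idem_iff)
  finally show ?thesis .
qed

lemma idem_mult: "idem S e \<Longrightarrow> idem S f \<Longrightarrow> dm e = dm f \<Longrightarrow> idem S (e \<cdot> f)"
proof -
  assume e: "idem S e" and f: "idem S f" and d: "dm e = dm f"
  have "f \<cdot> e \<cdot> f = e \<cdot> f \<cdot> f" using comm_tail[OF f e d[symmetric]] e f d by (simp add: idem_iff)
  hence "e \<cdot> f \<cdot> e \<cdot> f = e \<cdot> f" using e f d idem_tail[OF e] by (simp add: idem_iff)
  hence "(e \<cdot> f) \<cdot> (e \<cdot> f) = e \<cdot> f" using e f d by (simp add: idem_iff)
  thus ?thesis using e f d by (simp add: idem_iff)
qed

lemma idem_conj: "idem S f \<Longrightarrow> p \<in> A \<Longrightarrow> dm f = cd p \<Longrightarrow> idem S (iv p \<cdot> f \<cdot> p)"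
proof -
  assume f: "idem S f" and p: "p \<in> A" and d: "dm f = cd p"
  have c: "f \<cdot> p \<cdot> iv p \<cdot> f \<cdot> p = p \<cdot> iv p \<cdot> f \<cdot> f \<cdot> p"
    using comm_tail[OF f idem_ss[OF p], of "f \<cdot> p"] f p d by (simp add: idem_iff)
  have "(iv p \<cdot> f \<cdot> p) \<cdot> (iv p \<cdot> f \<cdot> p) = iv p \<cdot> (f \<cdot> p \<cdot> iv p \<cdot> f \<cdot> p)"
    using f p d by (simp add: idem_iff)
  also have "\<dots> = iv p \<cdot> f \<cdot> p" using c f p d idem_tail[OF f, of p] by (simp add: idem_iff)
  finally show ?thesis using f p d by (simp add: idem_iff)
qed

lemma nle_right_idem: "idem S e \<Longrightarrow> s \<in> A \<Longrightarrow> dm s = cd e \<Longrightarrow> nat_le S (s \<cdot> e) s"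
  unfolding nat_le_def comp_def by (auto simp: idem_iff)


end

context isg begin

lemma nle_left_idem: "idem S e \<Longrightarrow> s \<in> A \<Longrightarrow> dm e = cd s \<Longrightarrow> nat_le S (e \<cdot> s) s"
proof -
  assume e: "idem S e" and s: "s \<in> A" and d: "dm e = cd s"
  have eA: "e \<in> A" "cd e = cd s" "e \<cdot> e = e" using e d unfolding idem_iff by auto
  have f: "(s \<cdot> iv s) \<cdot> e \<cdot> s = e \<cdot> (s \<cdot> iv s) \<cdot> s"
    by (rule comm_tail) (use e s d in auto)
  have c': "e \<cdot> s = s \<cdot> (iv s \<cdot> e \<cdot> s)" using f eA s d by simp
  have "nat_le S (s \<cdot> (iv s \<cdot> e \<cdot> s)) s"
    by (rule nle_right_idem[OF idem_conj[OF e s d] s]) (use eA s d in simp)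
  thus ?thesis using c' by simp
qed

lemma nle_D: "nat_le S a b \<Longrightarrow> a \<in> A \<and> b \<in> A \<and> dm a = dm b \<and> cd a = cd b"
  unfolding nat_le_def by auto

lemma nle_E: assumes "nat_le S a b"
  obtains e where "idem S e" "e \<in> A" "dm b = cd e" "dm e = cd e" "e \<cdot> e = e" "a = b \<cdot> e"
    "a \<in> A" "b \<in> A" "dm a = dm b" "cd a = cd b"
  using assms unfolding nat_le_def comp_def idem_iff by auto

lemma nle_left_mult: "nat_le S a b \<Longrightarrow> c \<in> A \<Longrightarrow> dm c = cd b \<Longrightarrow> nat_le S (c \<cdot> a) (c \<cdot> b)"
proof -
  assume n: "nat_le S a b" and c: "c \<in> A" "dm c = cd b"
  obtain e where e: "idem S e" "e \<in> A" "dm b = cd e" "dm e = cd e" "e \<cdot> e = e" "a = b \<cdot> e"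
    "a \<in> A" "b \<in> A" "dm a = dm b" "cd a = cd b" using nle_E[OF n] by blast
  have "c \<cdot> a = (c \<cdot> b) \<cdot> e" using e c by simp
  moreover have "nat_le S ((c \<cdot> b) \<cdot> e) (c \<cdot> b)"
    by (rule nle_right_idem) (use e c in simp_all)
  ultimately show ?thesis by simp
qed

lemma nle_right_mult: "nat_le S a b \<Longrightarrow> p \<in> A \<Longrightarrow> dm b = cd p \<Longrightarrow> nat_le S (a \<cdot> p) (b \<cdot> p)"
proof -
  assume n: "nat_le S a b" and p: "p \<in> A" "dm b = cd p"
  obtain e where e: "idem S e" "e \<in> A" "dm b = cd e" "dm e = cd e" "e \<cdot> e = e" "a = b \<cdot> e"
    "a \<in> A" "b \<in> A" "dm a = dm b" "cd a = cd b" using nle_E[OF n] by blast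
  have f: "(p \<cdot> iv p) \<cdot> e \<cdot> p = e \<cdot> (p \<cdot> iv p) \<cdot> p"
    by (rule comm_tail) (use e p in auto)
  have c: "p \<cdot> iv p \<cdot> e \<cdot> p = e \<cdot> p" using f e p by simp
  have "a \<cdot> p = (b \<cdot> p) \<cdot> (iv p \<cdot> e \<cdot> p)"
    using e c p by simp
  moreover have "nat_le S ((b \<cdot> p) \<cdot> (iv p \<cdot> e \<cdot> p)) (b \<cdot> p)"
    by (rule nle_right_idem) (use e p idem_conj[OF e(1) p(1)] in simp_all)
  ultimately show ?thesis by simp
qed

lemma nle_star: "nat_le S a b \<Longrightarrow> nat_le S (iv a) (iv b)"
proof -
  assume n: "nat_le S a b"
  obtain e where e: "idem S e" "e \<in> A" "dm b = cd e" "dm e = cd e" "e \<cdot> e = e" "a = b \<cdot> e"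
    "a \<in> A" "b \<in> A" "dm a = dm b" "cd a = cd b" using nle_E[OF n] by blast
  have ie: "iv e = e" using idem_star[OF e(1)] .
  have "iv a = e \<cdot> iv b" using e ie by simp
  moreover have "nat_le S (e \<cdot> iv b) (iv b)" by (rule nle_left_idem) (use e in simp_all)
  ultimately show ?thesis by simp
qed

lemma nle_eq: "nat_le S a b \<Longrightarrow> a = b \<cdot> iv a \<cdot> a"
proof -
  assume n: "nat_le S a b"
  obtain e where e: "idem S e" "e \<in> A" "dm b = cd e" "dm e = cd e" "e \<cdot> e = e" "a = b \<cdot> e"
    "a \<in> A" "b \<in> A" "dm a = dm b" "cd a = cd b" using nle_E[OF n] by blast
  have ie: "iv e = e" using idem_star[OF e(1)] .
  have f: "e \<cdot> (iv b \<cdot> b) \<cdot> e = (iv b \<cdot> b) \<cdot> e \<cdot> e"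
    by (rule comm_tail) (use e in auto)
  have t: "e \<cdot> e \<cdot> b = e \<cdot> b" if "b \<in> A" "dm e = cd b" for b
    using idem_tail[OF e(1) that] .
  have c: "e \<cdot> iv b \<cdot> b \<cdot> e = iv b \<cdot> b \<cdot> e" using f e by simp
  have "b \<cdot> iv a \<cdot> a = b \<cdot> (e \<cdot> iv b \<cdot> b \<cdot> e)" using e ie by simp
  also have "\<dots> = b \<cdot> e" using c e by simp
  finally show ?thesis using e(6) by simp
qed

lemma nle_conj_idem: "idem S e \<Longrightarrow> q \<in> A \<Longrightarrow> dm e = cd q \<Longrightarrow> nat_le S (iv q \<cdot> e \<cdot> q) (iv q \<cdot> q)"
proof -
  assume e: "idem S e" and q: "q \<in> A" and d: "dm e = cd q"
  have eA: "e \<in> A" "cd e = cd q" using e d unfolding idem_iff by auto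
  have "nat_le S ((iv q \<cdot> q) \<cdot> (iv q \<cdot> e \<cdot> q)) (iv q \<cdot> q)"
    by (rule nle_right_idem) (use eA q d idem_conj[OF e q d] in simp_all)
  thus ?thesis using eA q d by simp
qed

end


locale pa = isg S for S :: "('a,'o,'z) semigroupoid_scheme" +
  fixes X :: "'x set" and Xs :: "'a \<Rightarrow> 'x set" and th :: "'a \<Rightarrow> 'x \<Rightarrow> 'x"
  assumes pa: "partial_action S X Xs th"
begin

lemma Xs_sub: "s \<in> A \<Longrightarrow> Xs s \<subseteq> X"
  using pa unfolding partial_action_def by blast
lemma X_Un: "X = (\<Union>s\<in>A. Xs s)"
  using pa unfolding partial_action_def by blast
lemma th_bij: "s \<in> A \<Longrightarrow> bij_betw (th s) (Xs (iv s)) (Xs s)"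
  using pa unfolding partial_action_def by blast
lemma th_in: "s \<in> A \<Longrightarrow> x \<in> Xs (iv s) \<Longrightarrow> th s x \<in> Xs s"
  using th_bij bij_betw_apply by metis
lemma th_inv1: "s \<in> A \<Longrightarrow> x \<in> Xs (iv s) \<Longrightarrow> th (iv s) (th s x) = x"
  using pa unfolding partial_action_def by blast
lemma th_inv2: "s \<in> A \<Longrightarrow> y \<in> Xs s \<Longrightarrow> th s (th (iv s) y) = y"
  using pa unfolding partial_action_def by blast
lemma th_comp0: "comp S s t \<Longrightarrow> x \<in> Xs (iv t) \<Longrightarrow> th t x \<in> Xs (iv s) \<Longrightarrow>
    x \<in> Xs (iv (s \<cdot> t)) \<and> th (s \<cdot> t) x = th s (th t x)"
  using pa unfolding partial_action_def by blast
lemma th_comp: "s \<in> A \<Longrightarrow> t \<in> A \<Longrightarrow> dm s = cd t \<Longrightarrow> x \<in> Xs (iv t) \<Longrightarrow> th t x \<in> Xs (iv s) \<Longrightarrow>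
    x \<in> Xs (iv (s \<cdot> t)) \<and> th (s \<cdot> t) x = th s (th t x)"
  using th_comp0 unfolding comp_def by blast
lemma Xs_mono: "nat_le S s t \<Longrightarrow> Xs s \<subseteq> Xs t"
  using pa unfolding partial_action_def by blast

lemma th_idem: assumes e: "idem S e" and x: "x \<in> Xs e" shows "th e x = x"
proof -
  have eA: "e \<in> A" "dm e = cd e" "e \<cdot> e = e" using e unfolding idem_iff by auto
  have ie: "iv e = e" using idem_star[OF e] .
  have x': "x \<in> Xs (iv e)" using x ie by simp
  have y: "th e x \<in> Xs (iv e)" using th_in[OF eA(1) x'] ie by simp
  have "th (e \<cdot> e) x = th e (th e x)" using th_comp[OF eA(1) eA(1) eA(2) x' y] by blast
  hence 1: "th e x = th e (th e x)" using eA by simp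
  have "th (iv e) (th e x) = x" using th_inv1[OF eA(1) x'] .
  hence "th e (th e x) = x" using ie by simp
  thus ?thesis using 1 by simp
qed

lemma X_ss: assumes s: "s \<in> A" shows "Xs (iv s) \<subseteq> Xs (iv s \<cdot> s)"
proof
  fix x assume x: "x \<in> Xs (iv s)"
  have y: "th s x \<in> Xs (iv (iv s))" using th_in[OF s x] s by simp
  have "x \<in> Xs (iv (iv s \<cdot> s))" using th_comp[OF star_arr[OF s] s _ x y] s by simp
  thus "x \<in> Xs (iv s \<cdot> s)" using s by simp
qed

lemma X_ss': assumes s: "s \<in> A" shows "Xs s \<subseteq> Xs (s \<cdot> iv s)"
  using X_ss[OF star_arr[OF s]] s by simp

lemma th_mono: assumes n: "nat_le S a b" and x: "x \<in> Xs (iv a)"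
  shows "x \<in> Xs (iv b) \<and> th a x = th b x"
proof -
  have ab: "a \<in> A" "b \<in> A" "dm a = dm b" "cd a = cd b" using nle_D[OF n] by auto
  have xb: "x \<in> Xs (iv b)" using Xs_mono[OF nle_star[OF n]] x by blast
  have x1: "x \<in> Xs (iv a \<cdot> a)" using X_ss[OF ab(1)] x by blast
  have ia: "iv (iv a \<cdot> a) = iv a \<cdot> a" using ab by simp
  have x2: "x \<in> Xs (iv (iv a \<cdot> a))" using x1 ia by simp
  have t1: "th (iv a \<cdot> a) x = x" using th_idem[OF idem_ss'[OF ab(1)] x1] .
  have "th (b \<cdot> (iv a \<cdot> a)) x = th b (th (iv a \<cdot> a) x)"
    using th_comp[OF ab(2) _ _ x2] t1 xb ab by simp
  moreover have "b \<cdot> (iv a \<cdot> a) = a" using nle_eq[OF n] by simp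
  ultimately show ?thesis using t1 xb by simp
qed

end


context pa begin

abbreviation D where "D \<equiv> glob_D S Xs"
lemma D_iff: "(s,x) \<in> D \<longleftrightarrow> s \<in> A \<and> x \<in> Xs (iv s \<cdot> s)"
  by (simp add: glob_D_def)

definition R1 where "R1 s x t y \<longleftrightarrow> s \<in> A \<and> t \<in> A \<and> cd t = cd s \<and> x \<in> Xs (iv s \<cdot> t) \<and> th (iv t \<cdot> s) x = y"
definition P1 where "P1 s x t y \<longleftrightarrow> x \<in> Xs (iv s) \<and> y \<in> Xs (iv t) \<and> th s x = th t y"
definition NN where "NN s x t y \<longleftrightarrow> (s,x) \<in> D \<and> (t,y) \<in> D \<and> (P1 s x t y \<or> R1 s x t y)"

lemma R1_refl: "(s,x) \<in> D \<Longrightarrow> R1 s x s x"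
  unfolding R1_def D_iff using th_idem[OF idem_ss'] by auto

lemma R1_sym: assumes r: "R1 s x t y" shows "R1 t y s x"
proof -
  have sA: "s \<in> A" "t \<in> A" "cd t = cd s" and x: "x \<in> Xs (iv s \<cdot> t)" and y: "th (iv t \<cdot> s) x = y"
    using r unfolding R1_def by auto
  have aA: "iv t \<cdot> s \<in> A" using sA by simp
  have ia: "iv (iv t \<cdot> s) = iv s \<cdot> t" using sA by simp
  have x': "x \<in> Xs (iv (iv t \<cdot> s))" using x ia by simp
  have "y \<in> Xs (iv t \<cdot> s)" using th_in[OF aA x'] y by simp
  moreover have "th (iv s \<cdot> t) y = x" using th_inv1[OF aA x'] y ia by simp
  ultimately show ?thesis using sA unfolding R1_def by simp
qed

lemma R1_trans: assumes r1: "R1 s x t y" and r2: "R1 t y u z" shows "R1 s x u z"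
proof -
  have sA: "s \<in> A" "t \<in> A" "cd t = cd s" and x: "x \<in> Xs (iv s \<cdot> t)" and y: "th (iv t \<cdot> s) x = y"
    using r1 unfolding R1_def by auto
  have uA: "u \<in> A" "cd u = cd t" and y2: "y \<in> Xs (iv t \<cdot> u)" and z: "th (iv u \<cdot> t) y = z"
    using r2 unfolding R1_def by auto
  have x': "x \<in> Xs (iv (iv t \<cdot> s))" using x sA by simp
  have y': "th (iv t \<cdot> s) x \<in> Xs (iv (iv u \<cdot> t))" using y y2 sA uA by simp
  have c: "x \<in> Xs (iv ((iv u \<cdot> t) \<cdot> (iv t \<cdot> s))) \<and> th ((iv u \<cdot> t) \<cdot> (iv t \<cdot> s)) x = th (iv u \<cdot> t) (th (iv t \<cdot> s) x)"
    by (rule th_comp[OF _ _ _ x' y']) (use sA uA in simp_all)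
  have c2: "x \<in> Xs (iv (iv u \<cdot> t \<cdot> iv t \<cdot> s)) \<and> th (iv u \<cdot> t \<cdot> iv t \<cdot> s) x = z"
    using c sA uA y z by simp
  have n1: "nat_le S ((t \<cdot> iv t) \<cdot> s) s" by (rule nle_left_idem) (use sA in simp_all)
  have n2: "nat_le S (iv u \<cdot> ((t \<cdot> iv t) \<cdot> s)) (iv u \<cdot> s)"
    by (rule nle_left_mult[OF n1]) (use sA uA in simp_all)
  have n3: "nat_le S (iv u \<cdot> t \<cdot> iv t \<cdot> s) (iv u \<cdot> s)" using n2 sA uA by simp
  have m: "x \<in> Xs (iv (iv u \<cdot> s)) \<and> th (iv u \<cdot> t \<cdot> iv t \<cdot> s) x = th (iv u \<cdot> s) x"
    using th_mono[OF n3] c2 by blast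
  show ?thesis unfolding R1_def using m c2 sA uA by simp
qed

lemma P1_R1: assumes p: "P1 s x t y" and sA: "s \<in> A" "t \<in> A" "cd s = cd t"
  shows "R1 s x t y"
proof -
  have x: "x \<in> Xs (iv s)" and y: "y \<in> Xs (iv t)" and e: "th s x = th t y" using p unfolding P1_def by auto
  have w: "th s x \<in> Xs (iv (iv t))" using th_in[OF sA(2) y] e sA by simp
  have c: "x \<in> Xs (iv (iv t \<cdot> s)) \<and> th (iv t \<cdot> s) x = th (iv t) (th s x)"
    by (rule th_comp[OF _ _ _ x w]) (use sA in simp_all)
  have "th (iv t) (th s x) = y" using e th_inv1[OF sA(2) y] by simp
  thus ?thesis unfolding R1_def using c sA by simp
qed

lemma P1_R1_P1: assumes p: "P1 s x t y" and r: "R1 t y u z" shows "P1 s x u z"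
proof -
  have x: "x \<in> Xs (iv s)" and y: "y \<in> Xs (iv t)" and e: "th s x = th t y" using p unfolding P1_def by auto
  have r': "R1 u z t y" using R1_sym[OF r] .
  have uA: "u \<in> A" "t \<in> A" "cd t = cd u" and z: "z \<in> Xs (iv u \<cdot> t)" and zy: "th (iv t \<cdot> u) z = y"
    using r' unfolding R1_def by auto
  have z': "z \<in> Xs (iv (iv t \<cdot> u))" using z uA by simp
  have y': "th (iv t \<cdot> u) z \<in> Xs (iv t)" using zy y by simp
  have c: "z \<in> Xs (iv (t \<cdot> (iv t \<cdot> u))) \<and> th (t \<cdot> (iv t \<cdot> u)) z = th t (th (iv t \<cdot> u) z)"
    by (rule th_comp[OF _ _ _ z' y']) (use uA in simp_all)
  have n: "nat_le S ((t \<cdot> iv t) \<cdot> u) u" by (rule nle_left_idem) (use uA in simp_all)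
  have n': "nat_le S (t \<cdot> iv t \<cdot> u) u" using n uA by simp
  have c': "z \<in> Xs (iv (t \<cdot> iv t \<cdot> u)) \<and> th (t \<cdot> iv t \<cdot> u) z = th t y" using c zy uA by simp
  have m: "z \<in> Xs (iv u) \<and> th (t \<cdot> iv t \<cdot> u) z = th u z" using th_mono[OF n'] c' by blast
  show ?thesis unfolding P1_def using m c' x e by simp
qed

lemma P1_sym: "P1 s x t y \<Longrightarrow> P1 t y s x" unfolding P1_def by auto
lemma P1_trans: "P1 s x t y \<Longrightarrow> P1 t y u z \<Longrightarrow> P1 s x u z" unfolding P1_def by auto

lemma NN_refl: "(s,x) \<in> D \<Longrightarrow> NN s x s x" unfolding NN_def using R1_refl by blast
lemma NN_sym: "NN s x t y \<Longrightarrow> NN t y s x" unfolding NN_def using R1_sym P1_sym by blast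
lemma NN_trans: assumes a: "NN s x t y" and b: "NN t y u z" shows "NN s x u z"
proof -
  have D: "(s,x) \<in> D" "(u,z) \<in> D" using a b unfolding NN_def by auto
  have "P1 s x u z \<or> R1 s x u z"
  proof -
    { assume "P1 s x t y" "P1 t y u z" hence ?thesis using P1_trans by blast }
    moreover { assume "P1 s x t y" "R1 t y u z" hence ?thesis using P1_R1_P1 by blast }
    moreover { assume "R1 s x t y" "P1 t y u z" hence ?thesis using P1_R1_P1[OF P1_sym R1_sym] P1_sym by blast }
    moreover { assume "R1 s x t y" "R1 t y u z" hence ?thesis using R1_trans by blast }
    ultimately show ?thesis using a b unfolding NN_def by blast
  qed
  thus ?thesis using D unfolding NN_def by blast
qed

lemma NN_same_cod: "NN s x t y \<Longrightarrow> cd s = cd t \<Longrightarrow> R1 s x t y"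
  unfolding NN_def D_iff using P1_R1 by blast

lemma NN_same: assumes "NN s x s y" shows "x = y"
proof -
  have r: "R1 s x s y" using NN_same_cod[OF assms] by simp
  hence sA: "s \<in> A" and x: "x \<in> Xs (iv s \<cdot> s)" and y: "th (iv s \<cdot> s) x = y" unfolding R1_def by auto
  show ?thesis using th_idem[OF idem_ss'[OF sA] x] y by simp
qed

lemma sim_iff: "((s,x),(t,y)) \<in> glob_sim S Xs th \<longleftrightarrow> (s,x) \<in> D \<and> (t,y) \<in> D \<and>
   (R1 s x t y \<or> (idem S s \<and> idem S t \<and> x = y))"
  unfolding glob_sim_def R1_def comp_def D_iff by auto

lemma sim_NN: assumes "((s,x),(t,y)) \<in> glob_sim S Xs th" shows "NN s x t y"
proof -
  have D: "(s,x) \<in> D" "(t,y) \<in> D" using assms sim_iff by auto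
  { assume i: "idem S s" "idem S t" "x = y"
    have "iv s = s" "iv t = t" "s \<cdot> s = s" "t \<cdot> t = t" using i idem_star by (auto simp: idem_iff)
    hence "P1 s x t y" using D i unfolding P1_def D_iff by (simp add: th_idem) }
  thus ?thesis using assms D sim_iff unfolding NN_def by blast
qed

lemma NN_approx: assumes n: "NN s x t y" shows "((s,x),(t,y)) \<in> glob_approx S Xs th"
proof -
  let ?r = "glob_sim S Xs th \<union> (glob_sim S Xs th)\<inverse>"
  have D: "(s,x) \<in> D" "(t,y) \<in> D" using n unfolding NN_def by auto
  have "((s,x),(t,y)) \<in> ?r\<^sup>*"
  proof (cases "R1 s x t y")
    case True
    hence "((s,x),(t,y)) \<in> glob_sim S Xs th" using D sim_iff by blast
    thus ?thesis by blast
  next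
    case False
    hence p: "P1 s x t y" using n unfolding NN_def by blast
    have chain: "((s,x),(s \<cdot> iv s, th s x)) \<in> glob_sim S Xs th" if d: "(s,x) \<in> D" and x: "x \<in> Xs (iv s)" for s x
    proof -
      have sA: "s \<in> A" using d D_iff by blast
      have w: "th s x \<in> Xs (s \<cdot> iv s)" using X_ss'[OF sA] th_in[OF sA x] by blast
      have d2: "(s \<cdot> iv s, th s x) \<in> D" using w sA unfolding D_iff by simp
      have i: "iv (s \<cdot> iv s) = s \<cdot> iv s" using sA by simp
      have "R1 s x (s \<cdot> iv s) (th s x)" unfolding R1_def using sA x i by simp
      thus ?thesis using d d2 sim_iff by blast
    qed
    have x: "x \<in> Xs (iv s)" and y: "y \<in> Xs (iv t)" and e: "th s x = th t y" using p unfolding P1_def by auto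
    have s1: "((s,x),(s \<cdot> iv s, th s x)) \<in> glob_sim S Xs th" using chain D x by blast
    have s3: "((t,y),(t \<cdot> iv t, th t y)) \<in> glob_sim S Xs th" using chain D y by blast
    have d1: "(s \<cdot> iv s, th s x) \<in> D" "(t \<cdot> iv t, th t y) \<in> D" using s1 s3 sim_iff by auto
    have sA: "s \<in> A" "t \<in> A" using D D_iff by auto
    have s2: "((s \<cdot> iv s, th s x),(t \<cdot> iv t, th t y)) \<in> glob_sim S Xs th"
      using d1 e sA sim_iff by simp
    have "((s,x),(s \<cdot> iv s, th s x)) \<in> ?r\<^sup>*" using s1 by blast
    also have "((s \<cdot> iv s, th s x),(t \<cdot> iv t, th t y)) \<in> ?r\<^sup>*" using s2 by blast
    also have "((t \<cdot> iv t, th t y),(t,y)) \<in> ?r\<^sup>*" using s3 by blast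
    finally show ?thesis .
  qed
  thus ?thesis unfolding glob_approx_def using D by blast
qed

lemma approx_NN: assumes a: "((s,x),(t,y)) \<in> glob_approx S Xs th" shows "NN s x t y"
proof -
  let ?r = "glob_sim S Xs th \<union> (glob_sim S Xs th)\<inverse>"
  have D: "(s,x) \<in> D" and st: "((s,x),(t,y)) \<in> ?r\<^sup>*" using a unfolding glob_approx_def by auto
  have "\<forall>t y. ((s,x),(t,y)) \<in> ?r\<^sup>* \<longrightarrow> NN s x t y"
  proof (intro allI impI)
    fix t y assume "((s,x),(t,y)) \<in> ?r\<^sup>*"
    thus "NN s x t y"
    proof (induction "(t,y)" arbitrary: t y rule: rtrancl_induct)
      case base thus ?case using NN_refl D by simp
    next
      case (step b t y)
      obtain b1 b2 where b: "b = (b1,b2)" by force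
      have "NN b1 b2 t y" using step(2) b sim_NN NN_sym by blast
      thus ?case using step(3) b NN_trans by blast
    qed
  qed
  thus ?thesis using st by blast
qed

lemma approx_iff: "((s,x),(t,y)) \<in> glob_approx S Xs th \<longleftrightarrow> NN s x t y"
  using NN_approx approx_NN by blast

lemma approx_iff': "(a,b) \<in> glob_approx S Xs th \<longleftrightarrow> NN (fst a) (snd a) (fst b) (snd b)"
  using approx_iff[of "fst a" "snd a" "fst b" "snd b"] by simp

lemma equiv_approx: "equiv D (glob_approx S Xs th)"
proof (rule equivI)
  show "refl_on D (glob_approx S Xs th)"
    unfolding refl_on_def using NN_refl approx_iff' NN_def by (auto simp: glob_approx_def)
  show "sym (glob_approx S Xs th)" unfolding sym_def using approx_iff' NN_sym by blast
  show "trans (glob_approx S Xs th)" unfolding trans_def using approx_iff' NN_trans by blast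
  show "glob_approx S Xs th \<subseteq> D \<times> D" unfolding glob_approx_def by blast
qed

abbreviation cls where "cls s x \<equiv> glob_cls S Xs th s x"

lemma cls_eq: "(s,x) \<in> D \<Longrightarrow> (t,y) \<in> D \<Longrightarrow> cls s x = cls t y \<longleftrightarrow> NN s x t y"
  unfolding glob_cls_def using eq_equiv_class_iff[OF equiv_approx] approx_iff by blast

lemma cls_in_E: "(s,x) \<in> D \<Longrightarrow> cls s x \<in> glob_E S Xs th"
  unfolding glob_cls_def glob_E_def by (rule quotientI)

lemma E_cases: assumes "C \<in> glob_E S Xs th" obtains s x where "(s,x) \<in> D" "C = cls s x"
  using assms unfolding glob_E_def glob_cls_def by (auto elim!: quotientE)

end


locale opa = pa S X Xs th for S :: "('a,'o,'z) semigroupoid_scheme" and X :: "'x set"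
  and Xs :: "'a \<Rightarrow> 'x set" and th :: "'a \<Rightarrow> 'x \<Rightarrow> 'x" +
  fixes le :: "'x \<Rightarrow> 'x \<Rightarrow> bool"
  assumes po: "poset X le" and oa: "ordered_action S X le Xs th"
begin

lemma le_refl: "x \<in> X \<Longrightarrow> le x x" using po unfolding poset_def by blast
lemma le_antisym: "x \<in> X \<Longrightarrow> y \<in> X \<Longrightarrow> le x y \<Longrightarrow> le y x \<Longrightarrow> x = y" using po unfolding poset_def by blast
lemma le_trans: "x \<in> X \<Longrightarrow> y \<in> X \<Longrightarrow> z \<in> X \<Longrightarrow> le x y \<Longrightarrow> le y z \<Longrightarrow> le x z" using po unfolding poset_def by blast
lemma ideal: "s \<in> A \<Longrightarrow> x \<in> Xs s \<Longrightarrow> y \<in> X \<Longrightarrow> le y x \<Longrightarrow> y \<in> Xs s"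
  using oa unfolding ordered_action_def order_ideal_def by blast
lemma iso: "s \<in> A \<Longrightarrow> x \<in> Xs (iv s) \<Longrightarrow> y \<in> Xs (iv s) \<Longrightarrow> le x y \<longleftrightarrow> le (th s x) (th s y)"
  using oa unfolding ordered_action_def order_iso_def by blast
lemma D_X: assumes "(s,x) \<in> D" shows "x \<in> X"
proof -
  have "s \<in> A" "x \<in> Xs (iv s \<cdot> s)" using assms D_iff by auto
  moreover have "iv s \<cdot> s \<in> A" using calculation by simp
  ultimately show ?thesis using Xs_sub by blast
qed

lemma transport: assumes n: "NN r y' q y''" and x': "x' \<in> X" "le x' y'"
  shows "\<exists>x2. NN q x2 r x' \<and> le x2 y''"
proof -
  have Dr: "(r,y') \<in> D" and Dq: "(q,y'') \<in> D" using n unfolding NN_def by auto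
  have rA: "r \<in> A" "y' \<in> Xs (iv r \<cdot> r)" and qA: "q \<in> A" "y'' \<in> Xs (iv q \<cdot> q)" using Dr Dq D_iff by auto
  have Dx': "(r,x') \<in> D" using ideal[OF _ rA(2) x'] rA unfolding D_iff by simp
  { assume R: "R1 r y' q y''"
    have c: "cd q = cd r" and y1: "y' \<in> Xs (iv r \<cdot> q)" and y2: "th (iv q \<cdot> r) y' = y''"
      using R unfolding R1_def by auto
    have aA: "iv q \<cdot> r \<in> A" "iv (iv q \<cdot> r) = iv r \<cdot> q" using rA qA c by simp_all
    have x1: "x' \<in> Xs (iv r \<cdot> q)" using ideal[OF _ y1 x'] rA qA c by simp
    define x2 where "x2 = th (iv q \<cdot> r) x'"
    have l: "le x2 y''" using iso[OF aA(1), of x' y'] aA(2) x1 y1 x' y2 x2_def by simp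
    have x2X: "x2 \<in> Xs (iv q \<cdot> r)" using th_in[OF aA(1), of x'] aA(2) x1 x2_def by simp
    have x2X': "x2 \<in> X" using x2X Xs_sub aA by blast
    have Dx2: "(q,x2) \<in> D" using ideal[OF _ qA(2) x2X' l] qA unfolding D_iff by simp
    have "R1 r x' q x2" unfolding R1_def using rA qA c x1 x2_def by simp
    hence "NN q x2 r x'" using Dx' Dx2 NN_sym unfolding NN_def by blast
    hence ?thesis using l by blast }
  moreover
  { assume P: "P1 r y' q y''"
    have y1: "y' \<in> Xs (iv r)" and y2: "y'' \<in> Xs (iv q)" and e: "th r y' = th q y''"
      using P unfolding P1_def by auto
    have x1: "x' \<in> Xs (iv r)" using ideal[OF _ y1 x'] rA by simp
    define w where "w = th r x'"
    have lw: "le w (th q y'')" using iso[OF rA(1) x1 y1] x' e w_def by simp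
    have wX: "w \<in> Xs r" using th_in[OF rA(1) x1] w_def by simp
    have wX': "w \<in> X" using wX Xs_sub rA by blast
    have tq: "th q y'' \<in> Xs q" using th_in[OF qA(1) y2] .
    have wq: "w \<in> Xs q" using ideal[OF qA(1) tq wX' lw] .
    define x2 where "x2 = th (iv q) w"
    have x2q: "x2 \<in> Xs (iv q)" using th_in[OF star_arr[OF qA(1)], of w] wq qA x2_def by simp
    have l: "le x2 y''" using iso[OF star_arr[OF qA(1)], of w "th q y''"] wq tq qA lw x2_def
        th_inv1[OF qA(1) y2] by simp
    have "th q x2 = w" using th_inv2[OF qA(1) wq] x2_def by simp
    hence "P1 q x2 r x'" unfolding P1_def using x2q x1 w_def by simp
    moreover have "(q,x2) \<in> D" using X_ss[OF qA(1)] x2q qA unfolding D_iff by auto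
    ultimately have "NN q x2 r x'" using Dx' unfolding NN_def by blast
    hence ?thesis using l by blast }
  ultimately show ?thesis using n unfolding NN_def by blast
qed

abbreviation rep where "rep \<equiv> glob_le_rep S X le Xs th"
abbreviation leE where "leE \<equiv> glob_le S X le Xs th"
abbreviation E where "E \<equiv> glob_E S Xs th"

lemma rep_wd: assumes "NN s x s2 x2" "NN t y t2 y2" shows "rep s x t y \<longleftrightarrow> rep s2 x2 t2 y2"
  unfolding glob_le_rep_def approx_iff using assms NN_trans NN_sym by meson

lemma rep_iff: assumes "(s,x) \<in> D" "(t,y) \<in> D" shows "rep s x t y \<longleftrightarrow> (\<exists>x2. NN t x2 s x \<and> le x2 y)"
proof
  assume "rep s x t y"
  then obtain r y' x' where r: "(r,y') \<in> D" "x' \<in> X" "NN r y' t y" "le x' y'" "NN r x' s x"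
    unfolding glob_le_rep_def approx_iff by blast
  obtain x2 where "NN t x2 r x'" "le x2 y" using transport[OF r(3) r(2) r(4)] by blast
  thus "\<exists>x2. NN t x2 s x \<and> le x2 y" using r(5) NN_trans by blast
next
  assume "\<exists>x2. NN t x2 s x \<and> le x2 y"
  then obtain x2 where x2: "NN t x2 s x" "le x2 y" by blast
  have "x2 \<in> X" using x2(1) D_X unfolding NN_def by blast
  thus "rep s x t y" unfolding glob_le_rep_def approx_iff using assms x2 NN_refl by blast
qed

lemma leE_cls: assumes d: "(s,x) \<in> D" "(t,y) \<in> D"
  shows "leE (cls s x) (cls t y) \<longleftrightarrow> (\<exists>x2. NN t x2 s x \<and> le x2 y)"
proof -
  have "leE (cls s x) (cls t y) \<longleftrightarrow> rep s x t y"
  proof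
    assume "leE (cls s x) (cls t y)"
    then obtain s' x' t' y' where o: "(s',x') \<in> D" "(t',y') \<in> D" "cls s x = cls s' x'"
      "cls t y = cls t' y'" "rep s' x' t' y'" unfolding glob_le_def by blast
    have "NN s x s' x'" "NN t y t' y'" using o d cls_eq by auto
    thus "rep s x t y" using rep_wd o(5) by blast
  next
    assume "rep s x t y" thus "leE (cls s x) (cls t y)" unfolding glob_le_def using d by blast
  qed
  thus ?thesis using rep_iff[OF d] by simp
qed

lemma poset_E: "poset E leE"
  unfolding poset_def
proof (intro conjI ballI impI)
  fix C assume "C \<in> E"
  then obtain s x where d: "(s,x) \<in> D" "C = cls s x" by (rule E_cases)
  show "leE C C" using leE_cls[OF d(1) d(1)] d NN_refl D_X le_refl by blast
next
  fix C1 C2 assume c: "C1 \<in> E" "C2 \<in> E" and l: "leE C1 C2 \<and> leE C2 C1"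
  obtain s x where d1: "(s,x) \<in> D" "C1 = cls s x" using c(1) by (rule E_cases)
  obtain t y where d2: "(t,y) \<in> D" "C2 = cls t y" using c(2) by (rule E_cases)
  obtain x2 where a: "NN t x2 s x" "le x2 y" using l leE_cls d1 d2 by blast
  obtain y2 where b: "NN s y2 t y" "le y2 x" using l leE_cls d1 d2 by blast
  have x2X: "x2 \<in> X" using a D_X unfolding NN_def by blast
  obtain x3 where x3: "NN s x3 t x2" "le x3 y2" using transport[OF NN_sym[OF b(1)] x2X a(2)] by blast
  have "x3 = x" using NN_same[OF NN_trans[OF x3(1) a(1)]] .
  hence "x = y2" using le_antisym b(2) x3(2) D_X d1 b(1) unfolding NN_def by blast
  hence "NN s x t y" using b(1) by simp
  thus "C1 = C2" using cls_eq d1 d2 by simp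
next
  fix C1 C2 C3 assume c: "C1 \<in> E" "C2 \<in> E" "C3 \<in> E" and l: "leE C1 C2 \<and> leE C2 C3"
  obtain s x where d1: "(s,x) \<in> D" "C1 = cls s x" using c(1) by (rule E_cases)
  obtain t y where d2: "(t,y) \<in> D" "C2 = cls t y" using c(2) by (rule E_cases)
  obtain u z where d3: "(u,z) \<in> D" "C3 = cls u z" using c(3) by (rule E_cases)
  obtain x2 where a: "NN t x2 s x" "le x2 y" using l leE_cls d1 d2 by blast
  obtain y2 where b: "NN u y2 t y" "le y2 z" using l leE_cls d2 d3 by blast
  have x2X: "x2 \<in> X" using a D_X unfolding NN_def by blast
  obtain x3 where x3: "NN u x3 t x2" "le x3 y2" using transport[OF NN_sym[OF b(1)] x2X a(2)] by blast
  have "le x3 z" using le_trans x3(2) b(2) D_X x3(1) b(1) d3(1) unfolding NN_def by blast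
  moreover have "NN u x3 s x" using NN_trans x3(1) a(1) by blast
  ultimately show "leE C1 C3" using leE_cls d1 d3 by blast
qed

end


context opa begin

abbreviation Ds where "Ds \<equiv> glob_Ds S Xs"
abbreviation Es where "Es \<equiv> glob_Es S Xs th"
abbreviation eta where "eta \<equiv> glob_eta S Xs th"

lemma Ds_iff: assumes s: "s \<in> A"
  shows "(p,x) \<in> Ds s \<longleftrightarrow> (p,x) \<in> D \<and> cd p = cd s \<and> x \<in> Xs (iv p \<cdot> s \<cdot> iv s \<cdot> p)"
proof -
  have "iv p \<cdot> ((s \<cdot> iv s) \<cdot> p) = iv p \<cdot> s \<cdot> iv s \<cdot> p" if "p \<in> A" "cd p = cd s" using that s by simp
  thus ?thesis unfolding glob_Ds_def comp_def D_iff using s by auto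
qed

lemma Ds_iff': assumes s: "s \<in> A"
  shows "(p,x) \<in> Ds (iv s) \<longleftrightarrow> (p,x) \<in> D \<and> cd p = dm s \<and> x \<in> Xs (iv p \<cdot> iv s \<cdot> s \<cdot> p)"
  using Ds_iff[OF star_arr[OF s], of p x] s by simp

lemma Es_iff: "C \<in> Es s \<longleftrightarrow> (\<exists>p x. (p,x) \<in> Ds s \<and> C = cls p x)"
  unfolding glob_Es_def by auto

lemma Ds_D: "(p,x) \<in> Ds s \<Longrightarrow> (p,x) \<in> D" unfolding glob_Ds_def by auto

lemma Es_sub: "Es s \<subseteq> E"
proof
  fix C assume "C \<in> Es s"
  then obtain p x where "(p,x) \<in> Ds s" "C = cls p x" using Es_iff by blast
  thus "C \<in> E" using Ds_D cls_in_E by simp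
qed

lemma INV: assumes r: "R1 q y p x" and e: "idem S e" "dm e = cd q" and y: "y \<in> Xs (iv q \<cdot> e \<cdot> q)"
  shows "x \<in> Xs (iv p \<cdot> e \<cdot> p)"
proof -
  have qA: "q \<in> A" "p \<in> A" "cd p = cd q" and y1: "y \<in> Xs (iv q \<cdot> p)" and x: "th (iv p \<cdot> q) y = x"
    using r unfolding R1_def by auto
  have eA: "e \<in> A" "cd e = dm e" "e \<cdot> e = e" "iv e = e" using e idem_star[OF e(1)] unfolding idem_iff by auto
  have g: "idem S (iv q \<cdot> e \<cdot> q)" using idem_conj[OF e(1) qA(1) e(2)] .
  have ig: "iv (iv q \<cdot> e \<cdot> q) = iv q \<cdot> e \<cdot> q" using idem_star[OF g] .
  have tg: "th (iv q \<cdot> e \<cdot> q) y = y" using th_idem[OF g y] .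
  have y': "y \<in> Xs (iv (iv q \<cdot> e \<cdot> q))" using y ig by simp
  have y'': "th (iv q \<cdot> e \<cdot> q) y \<in> Xs (iv (iv p \<cdot> q))" using tg y1 qA by simp
  have c: "y \<in> Xs (iv ((iv p \<cdot> q) \<cdot> (iv q \<cdot> e \<cdot> q))) \<and>
     th ((iv p \<cdot> q) \<cdot> (iv q \<cdot> e \<cdot> q)) y = th (iv p \<cdot> q) (th (iv q \<cdot> e \<cdot> q) y)"
    by (rule th_comp[OF _ _ _ y' y'']) (use qA eA e in simp_all)
  have f: "(q \<cdot> iv q) \<cdot> e \<cdot> q = e \<cdot> (q \<cdot> iv q) \<cdot> q" by (rule comm_tail) (use qA eA e in simp_all)
  have f': "q \<cdot> iv q \<cdot> e \<cdot> q = e \<cdot> q" using f qA eA e by simp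
  have pr: "(iv p \<cdot> q) \<cdot> (iv q \<cdot> e \<cdot> q) = iv p \<cdot> e \<cdot> q" using f' qA eA e by simp
  have c': "y \<in> Xs (iv (iv p \<cdot> e \<cdot> q)) \<and> th (iv p \<cdot> e \<cdot> q) y = x" using c pr tg x by simp
  have aA: "iv p \<cdot> e \<cdot> q \<in> A" using qA eA e by simp
  have xa: "x \<in> Xs (iv p \<cdot> e \<cdot> q)" using th_in[OF aA] c' by blast
  have xb: "x \<in> Xs ((iv p \<cdot> e \<cdot> q) \<cdot> iv (iv p \<cdot> e \<cdot> q))" using X_ss'[OF aA] xa by blast
  have f2: "(q \<cdot> iv q) \<cdot> e \<cdot> p = e \<cdot> (q \<cdot> iv q) \<cdot> p" by (rule comm_tail) (use qA eA e in simp_all)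
  have t: "e \<cdot> e \<cdot> u = e \<cdot> u" if "u \<in> A" "dm e = cd u" for u using idem_tail[OF e(1) that] .
  have pr2: "(iv p \<cdot> e \<cdot> q) \<cdot> iv (iv p \<cdot> e \<cdot> q) = iv p \<cdot> e \<cdot> q \<cdot> iv q \<cdot> p"
    using f2 qA eA e t by simp
  have n1: "nat_le S (e \<cdot> (q \<cdot> iv q)) e" by (rule nle_right_idem) (use qA eA e in simp_all)
  have n2: "nat_le S ((e \<cdot> (q \<cdot> iv q)) \<cdot> p) (e \<cdot> p)" by (rule nle_right_mult[OF n1]) (use qA eA e in simp_all)
  have n3: "nat_le S (iv p \<cdot> ((e \<cdot> (q \<cdot> iv q)) \<cdot> p)) (iv p \<cdot> (e \<cdot> p))"
    by (rule nle_left_mult[OF n2]) (use qA eA e in simp_all)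
  have n4: "nat_le S (iv p \<cdot> e \<cdot> q \<cdot> iv q \<cdot> p) (iv p \<cdot> e \<cdot> p)" using n3 qA eA e by simp
  show ?thesis using Xs_mono[OF n4] xb pr2 by auto
qed

lemma Es_mem: assumes s: "s \<in> A" and d: "(p,x) \<in> D" and c: "cd p = cd s"
  shows "cls p x \<in> Es s \<longleftrightarrow> x \<in> Xs (iv p \<cdot> s \<cdot> iv s \<cdot> p)"
proof
  assume "cls p x \<in> Es s"
  then obtain q y where q: "(q,y) \<in> Ds s" "cls p x = cls q y" using Es_iff by blast
  have q1: "(q,y) \<in> D" "cd q = cd s" "y \<in> Xs (iv q \<cdot> s \<cdot> iv s \<cdot> q)" using q(1) Ds_iff[OF s] by auto
  have "NN p x q y" using q(2) cls_eq d q1 by simp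
  hence "NN q y p x" by (rule NN_sym)
  hence r: "R1 q y p x" using NN_same_cod q1 c by simp
  have y': "y \<in> Xs (iv q \<cdot> (s \<cdot> iv s) \<cdot> q)" using q1 s d r unfolding R1_def by simp
  have "x \<in> Xs (iv p \<cdot> (s \<cdot> iv s) \<cdot> p)" by (rule INV[OF r idem_ss[OF s] _ y']) (use s q1 in simp)
  thus "x \<in> Xs (iv p \<cdot> s \<cdot> iv s \<cdot> p)" using s c d r unfolding R1_def by simp
next
  assume "x \<in> Xs (iv p \<cdot> s \<cdot> iv s \<cdot> p)"
  hence "(p,x) \<in> Ds s" using Ds_iff[OF s] d c by simp
  thus "cls p x \<in> Es s" using Es_iff by blast
qed

lemma idem_left_eq: assumes e: "idem S e" "dm e = cd p" and d: "(p,x) \<in> D" and x: "x \<in> Xs (iv p \<cdot> e \<cdot> p)"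
  shows "(e \<cdot> p, x) \<in> D \<and> NN (e \<cdot> p) x p x"
proof -
  have pA: "p \<in> A" using d D_iff by auto
  have eA: "e \<in> A" "cd e = dm e" "e \<cdot> e = e" "iv e = e" using e idem_star[OF e(1)] unfolding idem_iff by auto
  have t: "e \<cdot> e \<cdot> u = e \<cdot> u" if "u \<in> A" "dm e = cd u" for u using idem_tail[OF e(1) that] .
  have g: "idem S (iv p \<cdot> e \<cdot> p)" using idem_conj[OF e(1) pA e(2)] .
  have d2: "(e \<cdot> p, x) \<in> D" unfolding D_iff using pA eA e x t by simp
  have "R1 (e \<cdot> p) x p x" unfolding R1_def using pA eA e x th_idem[OF g x] by simp
  thus ?thesis using d d2 unfolding NN_def by blast
qed

lemma eta_wd: assumes s: "s \<in> A" and p: "(p,x) \<in> Ds (iv s)" and q: "(q,y) \<in> Ds (iv s)" and n: "NN p x q y"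
  shows "NN (s \<cdot> p) x (s \<cdot> q) y"
proof -
  have p1: "(p,x) \<in> D" "cd p = dm s" "x \<in> Xs (iv p \<cdot> iv s \<cdot> s \<cdot> p)" using p Ds_iff'[OF s] by auto
  have q1: "(q,y) \<in> D" "cd q = dm s" "y \<in> Xs (iv q \<cdot> iv s \<cdot> s \<cdot> q)" using q Ds_iff'[OF s] by auto
  have pA: "p \<in> A" "q \<in> A" using p1 q1 D_iff by auto
  have r: "R1 p x q y" using NN_same_cod[OF n] p1 q1 by simp
  have x1: "x \<in> Xs (iv p \<cdot> q)" and xy: "th (iv q \<cdot> p) x = y" using r unfolding R1_def by auto
  have g: "idem S (iv q \<cdot> (iv s \<cdot> s) \<cdot> q)" by (rule idem_conj) (use s pA q1 in simp_all)
  have ig: "iv (iv q \<cdot> (iv s \<cdot> s) \<cdot> q) = iv q \<cdot> (iv s \<cdot> s) \<cdot> q" using idem_star[OF g] .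
  have yg: "y \<in> Xs (iv q \<cdot> (iv s \<cdot> s) \<cdot> q)" using q1 s pA by simp
  have tg: "th (iv q \<cdot> (iv s \<cdot> s) \<cdot> q) y = y" using th_idem[OF g yg] .
  have x': "x \<in> Xs (iv (iv q \<cdot> p))" using x1 pA p1 q1 by simp
  have x'': "th (iv q \<cdot> p) x \<in> Xs (iv (iv q \<cdot> (iv s \<cdot> s) \<cdot> q))" using xy yg ig by simp
  have c: "x \<in> Xs (iv ((iv q \<cdot> (iv s \<cdot> s) \<cdot> q) \<cdot> (iv q \<cdot> p))) \<and>
     th ((iv q \<cdot> (iv s \<cdot> s) \<cdot> q) \<cdot> (iv q \<cdot> p)) x = th (iv q \<cdot> (iv s \<cdot> s) \<cdot> q) (th (iv q \<cdot> p) x)"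
    by (rule th_comp[OF _ _ _ x' x'']) (use s pA p1 q1 in simp_all)
  have f: "(iv s \<cdot> s) \<cdot> (q \<cdot> iv q) \<cdot> p = (q \<cdot> iv q) \<cdot> (iv s \<cdot> s) \<cdot> p"
    by (rule comm_tail) (use s pA p1 q1 in simp_all)
  have f': "iv s \<cdot> s \<cdot> q \<cdot> iv q \<cdot> p = q \<cdot> iv q \<cdot> iv s \<cdot> s \<cdot> p" using f s pA p1 q1 by simp
  have pr: "(iv q \<cdot> (iv s \<cdot> s) \<cdot> q) \<cdot> (iv q \<cdot> p) = iv q \<cdot> iv s \<cdot> s \<cdot> p" using f' s pA p1 q1 by simp
  have c': "x \<in> Xs (iv (iv q \<cdot> iv s \<cdot> s \<cdot> p)) \<and> th (iv q \<cdot> iv s \<cdot> s \<cdot> p) x = y"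
    using c pr tg xy by simp
  have R: "R1 (s \<cdot> p) x (s \<cdot> q) y" unfolding R1_def using c' s pA p1 q1 by simp
  have d1: "(s \<cdot> p, x) \<in> D" unfolding D_iff using s pA p1 by simp
  have d2: "(s \<cdot> q, y) \<in> D" unfolding D_iff using s pA q1 by simp
  show ?thesis using R d1 d2 unfolding NN_def by blast
qed

lemma eta_Ds: assumes s: "s \<in> A" and p: "(p,x) \<in> Ds (iv s)" shows "(s \<cdot> p, x) \<in> Ds s"
proof -
  have p1: "(p,x) \<in> D" "cd p = dm s" "x \<in> Xs (iv p \<cdot> iv s \<cdot> s \<cdot> p)" using p Ds_iff'[OF s] by auto
  have pA: "p \<in> A" using p1 D_iff by auto
  show ?thesis unfolding Ds_iff[OF s] D_iff using s pA p1 by simp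
qed

lemma eta_rep: assumes s: "s \<in> A" and p: "(p,x) \<in> Ds (iv s)" shows "eta s (cls p x) = cls (s \<cdot> p) x"
proof -
  define z where "z = (SOME (p', x'). (p', x') \<in> Ds (iv s) \<and> cls p x = cls p' x')"
  have "(\<lambda>(p', x'). (p', x') \<in> Ds (iv s) \<and> cls p x = cls p' x') z"
    unfolding z_def by (rule someI[where x="(p,x)"]) (use p in simp)
  then obtain p' x' where z: "z = (p',x')" "(p',x') \<in> Ds (iv s)" "cls p x = cls p' x'" by (cases z) auto
  have e: "eta s (cls p x) = cls (s \<cdot> p') x'"
    unfolding glob_eta_def Let_def z_def[symmetric] using z(1) by simp
  have "NN p x p' x'" using z(3) cls_eq Ds_D p z(2) by simp
  hence "NN p' x' p x" by (rule NN_sym)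
  hence "NN (s \<cdot> p') x' (s \<cdot> p) x" using eta_wd[OF s z(2) p] by blast
  hence "cls (s \<cdot> p') x' = cls (s \<cdot> p) x" using cls_eq NN_def by blast
  thus ?thesis using e by simp
qed

end


context opa begin

lemma Es_E: assumes "C \<in> Es s" obtains p x where "(p,x) \<in> Ds s" "C = cls p x"
  using assms Es_iff by blast

lemma eta_mem: assumes s: "s \<in> A" and p: "(p,x) \<in> Ds (iv s)" shows "eta s (cls p x) \<in> Es s"
  using eta_rep[OF s p] eta_Ds[OF s p] Es_iff by blast

lemma eta_inv: assumes s: "s \<in> A" and C: "C \<in> Es (iv s)" shows "eta (iv s) (eta s C) = C"
proof -
  obtain p x where p: "(p,x) \<in> Ds (iv s)" "C = cls p x" using C by (rule Es_E)
  have p1: "(p,x) \<in> D" "cd p = dm s" "x \<in> Xs (iv p \<cdot> iv s \<cdot> s \<cdot> p)" using p Ds_iff'[OF s] by auto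
  have pA: "p \<in> A" using p1 D_iff by auto
  have e1: "eta s C = cls (s \<cdot> p) x" using eta_rep[OF s p(1)] p(2) by simp
  have d2: "(s \<cdot> p, x) \<in> Ds (iv (iv s))" using eta_Ds[OF s p(1)] s by simp
  have e2: "eta (iv s) (cls (s \<cdot> p) x) = cls (iv s \<cdot> s \<cdot> p) x"
    using eta_rep[OF star_arr[OF s] d2] s pA p1 by simp
  have x': "x \<in> Xs (iv p \<cdot> (iv s \<cdot> s) \<cdot> p)" using p1 pA s by simp
  have l: "((iv s \<cdot> s) \<cdot> p, x) \<in> D \<and> NN ((iv s \<cdot> s) \<cdot> p) x p x"
    by (rule idem_left_eq[OF idem_ss'[OF s] _ p1(1) x']) (use s p1 in simp)
  have l': "(iv s \<cdot> s \<cdot> p, x) \<in> D \<and> NN (iv s \<cdot> s \<cdot> p) x p x" using l s pA p1 by simp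
  have "cls (iv s \<cdot> s \<cdot> p) x = cls p x" using cls_eq l' p1(1) by blast
  thus ?thesis using e1 e2 p(2) by simp
qed

lemma eta_inv2: assumes s: "s \<in> A" and C: "C \<in> Es s" shows "eta s (eta (iv s) C) = C"
  using eta_inv[OF star_arr[OF s]] C s by simp

lemma eta_in: assumes s: "s \<in> A" and C: "C \<in> Es (iv s)" shows "eta s C \<in> Es s"
proof -
  obtain p x where p: "(p,x) \<in> Ds (iv s)" "C = cls p x" using C by (rule Es_E)
  show ?thesis using eta_mem[OF s p(1)] p(2) by simp
qed

lemma eta_bij: assumes s: "s \<in> A" shows "bij_betw (eta s) (Es (iv s)) (Es s)"
proof (rule bij_betw_byWitness[where f'="eta (iv s)"])
  show "\<forall>a\<in>Es (iv s). eta (iv s) (eta s a) = a" using eta_inv[OF s] by blast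
  show "\<forall>a'\<in>Es s. eta s (eta (iv s) a') = a'" using eta_inv2[OF s] by blast
  show "eta s ` Es (iv s) \<subseteq> Es s" using eta_in[OF s] by blast
  have "eta (iv s) C \<in> Es (iv s)" if "C \<in> Es s" for C
    using eta_in[OF star_arr[OF s], of C] that s by simp
  thus "eta (iv s) ` Es s \<subseteq> Es (iv s)" by blast
qed

lemma E_Un: "E = (\<Union>s\<in>A. Es s)"
proof
  show "(\<Union>s\<in>A. Es s) \<subseteq> E" using Es_sub by blast
  show "E \<subseteq> (\<Union>s\<in>A. Es s)"
  proof
    fix C assume "C \<in> E"
    then obtain p x where d: "(p,x) \<in> D" "C = cls p x" by (rule E_cases)
    have pA: "p \<in> A" and x: "x \<in> Xs (iv p \<cdot> p)" using d D_iff by auto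
    have "(p,x) \<in> Ds p" unfolding Ds_iff[OF pA] using d pA x by simp
    hence "C \<in> Es p" using d Es_iff by blast
    thus "C \<in> (\<Union>s\<in>A. Es s)" using pA by blast
  qed
qed

lemma global1: assumes st: "s \<in> A" "t \<in> A" "dm s = cd t"
  shows "{C \<in> Es (iv t). eta t C \<in> Es (iv s)} = Es (iv (s \<cdot> t))"
proof
  have stA: "s \<cdot> t \<in> A" using st by simp
  show "{C \<in> Es (iv t). eta t C \<in> Es (iv s)} \<subseteq> Es (iv (s \<cdot> t))"
  proof
    fix C assume C: "C \<in> {C \<in> Es (iv t). eta t C \<in> Es (iv s)}"
    obtain p x where p: "(p,x) \<in> Ds (iv t)" "C = cls p x" using C by (auto elim: Es_E)
    have p1: "(p,x) \<in> D" "cd p = dm t" "x \<in> Xs (iv p \<cdot> iv t \<cdot> t \<cdot> p)" using p Ds_iff'[OF st(2)] by auto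
    have pA: "p \<in> A" using p1 D_iff by auto
    have e: "eta t C = cls (t \<cdot> p) x" using eta_rep[OF st(2) p(1)] p(2) by simp
    have d2: "(t \<cdot> p, x) \<in> D" using Ds_D[OF eta_Ds[OF st(2) p(1)]] .
    have "cls (t \<cdot> p) x \<in> Es (iv s)" using C e by simp
    hence "x \<in> Xs (iv (t \<cdot> p) \<cdot> iv s \<cdot> iv (iv s) \<cdot> (t \<cdot> p))"
      using Es_mem[OF star_arr[OF st(1)] d2] st pA p1 by simp
    hence "x \<in> Xs (iv p \<cdot> iv (s \<cdot> t) \<cdot> (s \<cdot> t) \<cdot> p)" using st pA p1 by simp
    hence "(p,x) \<in> Ds (iv (s \<cdot> t))" unfolding Ds_iff'[OF stA] using p1 st by simp
    thus "C \<in> Es (iv (s \<cdot> t))" using p(2) Es_iff by blast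
  qed
  show "Es (iv (s \<cdot> t)) \<subseteq> {C \<in> Es (iv t). eta t C \<in> Es (iv s)}"
  proof
    fix C assume C: "C \<in> Es (iv (s \<cdot> t))"
    obtain p x where p: "(p,x) \<in> Ds (iv (s \<cdot> t))" "C = cls p x" using C by (rule Es_E)
    have p1: "(p,x) \<in> D" "cd p = dm (s \<cdot> t)" "x \<in> Xs (iv p \<cdot> iv (s \<cdot> t) \<cdot> (s \<cdot> t) \<cdot> p)"
      using p Ds_iff'[OF stA] by auto
    have pA: "p \<in> A" using p1 D_iff by auto
    have cp: "cd p = dm t" using p1 st by simp
    have x1: "x \<in> Xs (iv (t \<cdot> p) \<cdot> (iv s \<cdot> s) \<cdot> (t \<cdot> p))" using p1 st pA cp by simp
    have n: "nat_le S (iv (t \<cdot> p) \<cdot> (iv s \<cdot> s) \<cdot> (t \<cdot> p)) (iv (t \<cdot> p) \<cdot> (t \<cdot> p))"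
      by (rule nle_conj_idem) (use st pA cp in simp_all)
    have x2: "x \<in> Xs (iv (t \<cdot> p) \<cdot> (t \<cdot> p))" using Xs_mono[OF n] x1 by blast
    hence "(p,x) \<in> Ds (iv t)" unfolding Ds_iff'[OF st(2)] using p1 st pA cp by simp
    hence m1: "C \<in> Es (iv t)" using p(2) Es_iff by blast
    have e: "eta t C = cls (t \<cdot> p) x" using eta_rep[OF st(2) \<open>(p,x) \<in> Ds (iv t)\<close>] p(2) by simp
    have "(t \<cdot> p, x) \<in> Ds (iv s)" unfolding Ds_iff'[OF st(1)] D_iff using x1 x2 st pA cp by simp
    hence "eta t C \<in> Es (iv s)" using e Es_iff by blast
    thus "C \<in> {C \<in> Es (iv t). eta t C \<in> Es (iv s)}" using m1 by blast
  qed
qed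

lemma global2: assumes st: "s \<in> A" "t \<in> A" "dm s = cd t" and C: "C \<in> Es (iv (s \<cdot> t))"
  shows "eta (s \<cdot> t) C = eta s (eta t C)"
proof -
  have stA: "s \<cdot> t \<in> A" using st by simp
  obtain p x where p: "(p,x) \<in> Ds (iv (s \<cdot> t))" "C = cls p x" using C by (rule Es_E)
  have Ct: "C \<in> Es (iv t)" and Cs: "eta t C \<in> Es (iv s)" using global1[OF st] C by auto
  have p1: "(p,x) \<in> D" "cd p = dm (s \<cdot> t)" using p Ds_iff'[OF stA] by auto
  have pA: "p \<in> A" using p1 D_iff by auto
  have cp: "cd p = dm t" using p1 st by simp
  obtain p' x' where p': "(p',x') \<in> Ds (iv t)" "C = cls p' x'" using Ct by (rule Es_E)
  have dt: "(p,x) \<in> Ds (iv t)"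
  proof -
    have "cls p x \<in> Es (iv t)" using Ct p by simp
    hence "x \<in> Xs (iv p \<cdot> iv t \<cdot> iv (iv t) \<cdot> p)" using Es_mem[OF star_arr[OF st(2)] p1(1)] st cp by simp
    thus ?thesis unfolding Ds_iff'[OF st(2)] using p1 cp st by simp
  qed
  have e1: "eta t C = cls (t \<cdot> p) x" using eta_rep[OF st(2) dt] p(2) by simp
  have ds: "(t \<cdot> p, x) \<in> Ds (iv s)"
  proof -
    have d2: "(t \<cdot> p, x) \<in> D" using Ds_D[OF eta_Ds[OF st(2) dt]] .
    have "cls (t \<cdot> p) x \<in> Es (iv s)" using Cs e1 by simp
    hence "x \<in> Xs (iv (t \<cdot> p) \<cdot> iv s \<cdot> iv (iv s) \<cdot> (t \<cdot> p))"
      using Es_mem[OF star_arr[OF st(1)] d2] st pA cp by simp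
    thus ?thesis unfolding Ds_iff'[OF st(1)] using d2 st pA cp by simp
  qed
  have e2: "eta s (cls (t \<cdot> p) x) = cls (s \<cdot> t \<cdot> p) x" using eta_rep[OF st(1) ds] .
  have e3: "eta (s \<cdot> t) C = cls ((s \<cdot> t) \<cdot> p) x" using eta_rep[OF stA p(1)] p(2) by simp
  show ?thesis using e1 e2 e3 st pA cp by simp
qed

lemma Es_mono: assumes n: "nat_le S s t" shows "Es s \<subseteq> Es t"
proof
  fix C assume C: "C \<in> Es s"
  obtain e where e: "idem S e" "e \<in> A" "dm t = cd e" "dm e = cd e" "e \<cdot> e = e" "s = t \<cdot> e"
    "s \<in> A" "t \<in> A" "dm s = dm t" "cd s = cd t" using nle_E[OF n] by blast
  obtain p x where p: "(p,x) \<in> Ds s" "C = cls p x" using C by (rule Es_E)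
  have p1: "(p,x) \<in> D" "cd p = cd s" "x \<in> Xs (iv p \<cdot> s \<cdot> iv s \<cdot> p)" using p Ds_iff[OF e(7)] by auto
  have pA: "p \<in> A" using p1 D_iff by auto
  have n0: "nat_le S ((t \<cdot> iv t) \<cdot> (s \<cdot> iv s)) (t \<cdot> iv t)"
    by (rule nle_right_idem) (use e idem_ss[OF e(7)] in simp_all)
  have eq: "(t \<cdot> iv t) \<cdot> (s \<cdot> iv s) = s \<cdot> iv s" using e by simp
  have n1: "nat_le S (s \<cdot> iv s) (t \<cdot> iv t)" using n0 eq by simp
  have n2: "nat_le S ((s \<cdot> iv s) \<cdot> p) ((t \<cdot> iv t) \<cdot> p)" by (rule nle_right_mult[OF n1]) (use e pA p1 in simp_all)
  have n3: "nat_le S (iv p \<cdot> ((s \<cdot> iv s) \<cdot> p)) (iv p \<cdot> ((t \<cdot> iv t) \<cdot> p))"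
    by (rule nle_left_mult[OF n2]) (use e pA p1 in simp_all)
  have n4: "nat_le S (iv p \<cdot> s \<cdot> iv s \<cdot> p) (iv p \<cdot> t \<cdot> iv t \<cdot> p)" using n3 e pA p1 by simp
  have "x \<in> Xs (iv p \<cdot> t \<cdot> iv t \<cdot> p)" using Xs_mono[OF n4] p1 by blast
  hence "(p,x) \<in> Ds t" unfolding Ds_iff[OF e(8)] using p1 e by simp
  thus "C \<in> Es t" using p(2) Es_iff by blast
qed

lemma Es_ideal: assumes s: "s \<in> A" shows "order_ideal E leE (Es s)"
  unfolding order_ideal_def
proof (intro conjI ballI impI)
  show "Es s \<subseteq> E" by (rule Es_sub)
next
  fix C C' assume C: "C \<in> Es s" and C': "C' \<in> E" and l: "leE C' C"
  obtain p x where p: "(p,x) \<in> Ds s" "C = cls p x" using C by (rule Es_E)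
  obtain q z where q: "(q,z) \<in> D" "C' = cls q z" using C' by (rule E_cases)
  have p1: "(p,x) \<in> D" "cd p = cd s" "x \<in> Xs (iv p \<cdot> s \<cdot> iv s \<cdot> p)" using p Ds_iff[OF s] by auto
  have pA: "p \<in> A" using p1 D_iff by auto
  obtain x2 where x2: "NN p x2 q z" "le x2 x" using leE_cls[OF q(1) p1(1)] l p q by auto
  have d2: "(p,x2) \<in> D" using x2 NN_def by blast
  have x2X: "x2 \<in> X" using D_X[OF d2] .
  have "x2 \<in> Xs (iv p \<cdot> s \<cdot> iv s \<cdot> p)" by (rule ideal[OF _ p1(3) x2X x2(2)]) (use s pA p1 in simp)
  hence "(p,x2) \<in> Ds s" unfolding Ds_iff[OF s] using d2 p1 by simp
  moreover have "C' = cls p x2" using cls_eq d2 q x2 NN_sym by metis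
  ultimately show "C' \<in> Es s" using Es_iff by blast
qed

lemma eta_mono: assumes s: "s \<in> A" and C: "C1 \<in> Es (iv s)" "C2 \<in> Es (iv s)" and l: "leE C1 C2"
  shows "leE (eta s C1) (eta s C2)"
proof -
  obtain p x where p: "(p,x) \<in> Ds (iv s)" "C1 = cls p x" using C(1) by (rule Es_E)
  obtain q y where q: "(q,y) \<in> Ds (iv s)" "C2 = cls q y" using C(2) by (rule Es_E)
  have p1: "(p,x) \<in> D" using p Ds_D by blast
  have q1: "(q,y) \<in> D" "cd q = dm s" "y \<in> Xs (iv q \<cdot> iv s \<cdot> s \<cdot> q)" using q Ds_iff'[OF s] by auto
  have qA: "q \<in> A" using q1 D_iff by auto
  obtain x2 where x2: "NN q x2 p x" "le x2 y" using leE_cls[OF p1 q1(1)] l p q by auto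
  have d2: "(q,x2) \<in> D" using x2 NN_def by blast
  have x2X: "x2 \<in> X" using D_X[OF d2] .
  have "x2 \<in> Xs (iv q \<cdot> iv s \<cdot> s \<cdot> q)" by (rule ideal[OF _ q1(3) x2X x2(2)]) (use s qA q1 in simp)
  hence dq: "(q,x2) \<in> Ds (iv s)" unfolding Ds_iff'[OF s] using d2 q1 by simp
  have "C1 = cls q x2" using cls_eq d2 p1 p x2 NN_sym by metis
  hence e1: "eta s C1 = cls (s \<cdot> q) x2" using eta_rep[OF s dq] by simp
  have e2: "eta s C2 = cls (s \<cdot> q) y" using eta_rep[OF s q(1)] q(2) by simp
  have a: "(s \<cdot> q, x2) \<in> D" "(s \<cdot> q, y) \<in> D" using Ds_D[OF eta_Ds[OF s dq]] Ds_D[OF eta_Ds[OF s q(1)]] by auto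
  have "leE (cls (s \<cdot> q) x2) (cls (s \<cdot> q) y)" using leE_cls[OF a] NN_refl[OF a(1)] x2(2) by blast
  thus ?thesis using e1 e2 by simp
qed

lemma eta_iso: assumes s: "s \<in> A" shows "order_iso leE (eta s) (Es (iv s)) (Es s)"
  unfolding order_iso_def
proof (intro conjI ballI)
  show "bij_betw (eta s) (Es (iv s)) (Es s)" by (rule eta_bij[OF s])
next
  fix C1 C2 assume C: "C1 \<in> Es (iv s)" "C2 \<in> Es (iv s)"
  show "leE C1 C2 \<longleftrightarrow> leE (eta s C1) (eta s C2)"
  proof
    assume "leE C1 C2" thus "leE (eta s C1) (eta s C2)" using eta_mono[OF s C] by blast
  next
    assume l: "leE (eta s C1) (eta s C2)"
    have m: "eta s C1 \<in> Es (iv (iv s))" "eta s C2 \<in> Es (iv (iv s))" using eta_in[OF s] C s by auto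
    have "leE (eta (iv s) (eta s C1)) (eta (iv s) (eta s C2))" using eta_mono[OF star_arr[OF s] m l] .
    thus "leE C1 C2" using eta_inv[OF s] C by simp
  qed
qed

lemma eta_global: "ordered_global_action S E leE Es eta"
proof -
  have pa: "partial_action S E Es eta"
    unfolding partial_action_def
  proof (intro conjI ballI allI impI)
    show "\<And>s. s \<in> A \<Longrightarrow> Es s \<subseteq> E" using Es_sub by blast
    show "E = (\<Union>s\<in>A. Es s)" by (rule E_Un)
    show "\<And>s. s \<in> A \<Longrightarrow> bij_betw (eta s) (Es (iv s)) (Es s)" by (rule eta_bij)
    show "\<And>s x. s \<in> A \<Longrightarrow> x \<in> Es (iv s) \<Longrightarrow> eta (iv s) (eta s x) = x" by (rule eta_inv)
    show "\<And>s y. s \<in> A \<Longrightarrow> y \<in> Es s \<Longrightarrow> eta s (eta (iv s) y) = y" by (rule eta_inv2)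
    show "\<And>s t. nat_le S s t \<Longrightarrow> Es s \<subseteq> Es t" by (rule Es_mono)
  next
    fix s t C assume a: "comp S s t \<and> C \<in> Es (iv t) \<and> eta t C \<in> Es (iv s)"
    have st: "s \<in> A" "t \<in> A" "dm s = cd t" using a unfolding comp_def by auto
    have "C \<in> Es (iv (s \<cdot> t))" using global1[OF st] a by blast
    thus "C \<in> Es (iv (s \<cdot> t))" .
    show "eta (s \<cdot> t) C = eta s (eta t C)" using global2[OF st \<open>C \<in> Es (iv (s \<cdot> t))\<close>] .
  qed
  have ga: "global_action S E Es eta"
    unfolding global_action_def using pa global1 global2 unfolding comp_def by blast
  have oa: "ordered_action S E leE Es eta"
    unfolding ordered_action_def using Es_ideal eta_iso by blast
  show ?thesis unfolding ordered_global_action_def using poset_E ga oa by blast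
qed

end

theorem mainTheorem5:
  fixes S :: "('a, 'o) semigroupoid"
    and X :: "'x set" and le :: "'x \<Rightarrow> 'x \<Rightarrow> bool"
    and Xs :: "'a \<Rightarrow> 'x set" and \<theta> :: "'a \<Rightarrow> 'x \<Rightarrow> 'x"
  assumes "inverse_semigroupoid S"
    and "ordered_partial_action S X le Xs \<theta>"
  shows "(\<forall>s x s2 x2 t y t2 y2.
            ((s, x), (s2, x2)) \<in> glob_approx S Xs \<theta> \<and> ((t, y), (t2, y2)) \<in> glob_approx S Xs \<theta> \<longrightarrow>
            (glob_le_rep S X le Xs \<theta> s x t y \<longleftrightarrow> glob_le_rep S X le Xs \<theta> s2 x2 t2 y2))
       \<and> poset (glob_E S Xs \<theta>) (glob_le S X le Xs \<theta>)
       \<and> (\<forall>s\<in>arr S. order_ideal (glob_E S Xs \<theta>) (glob_le S X le Xs \<theta>) (glob_Es S Xs \<theta> s))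
       \<and> (\<forall>s\<in>arr S. \<forall>C1\<in>glob_Es S Xs \<theta> (star S s). \<forall>C2\<in>glob_Es S Xs \<theta> (star S s).
            glob_le S X le Xs \<theta> C1 C2 \<longrightarrow> glob_le S X le Xs \<theta> (glob_eta S Xs \<theta> s C1) (glob_eta S Xs \<theta> s C2))
       \<and> ordered_global_action S (glob_E S Xs \<theta>) (glob_le S X le Xs \<theta>) (glob_Es S Xs \<theta>) (glob_eta S Xs \<theta>)"
proof -
  have o: "poset X le" "partial_action S X Xs \<theta>" "ordered_action S X le Xs \<theta>"
    using assms(2) unfolding ordered_partial_action_def by auto
  interpret opa S X Xs \<theta> le
    using assms(1) o by (simp add: opa_def pa_def pa_axioms_def isg_def opa_axioms_def)
  show ?thesis
  proof (intro conjI)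
    show "\<forall>s x s2 x2 t y t2 y2.
            ((s, x), (s2, x2)) \<in> glob_approx S Xs \<theta> \<and> ((t, y), (t2, y2)) \<in> glob_approx S Xs \<theta> \<longrightarrow>
            (glob_le_rep S X le Xs \<theta> s x t y \<longleftrightarrow> glob_le_rep S X le Xs \<theta> s2 x2 t2 y2)"
    proof (intro allI impI)
      fix s x s2 x2 t y t2 y2
      assume h: "((s, x), (s2, x2)) \<in> glob_approx S Xs \<theta> \<and> ((t, y), (t2, y2)) \<in> glob_approx S Xs \<theta>"
      hence "NN s x s2 x2" "NN t y t2 y2" using approx_iff by auto
      thus "glob_le_rep S X le Xs \<theta> s x t y \<longleftrightarrow> glob_le_rep S X le Xs \<theta> s2 x2 t2 y2" by (rule rep_wd)
    qed
    show "poset (glob_E S Xs \<theta>) (glob_le S X le Xs \<theta>)" by (rule poset_E)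
    show "\<forall>s\<in>arr S. order_ideal (glob_E S Xs \<theta>) (glob_le S X le Xs \<theta>) (glob_Es S Xs \<theta> s)"
      using Es_ideal by blast
    show "\<forall>s\<in>arr S. \<forall>C1\<in>glob_Es S Xs \<theta> (star S s). \<forall>C2\<in>glob_Es S Xs \<theta> (star S s).
            glob_le S X le Xs \<theta> C1 C2 \<longrightarrow> glob_le S X le Xs \<theta> (glob_eta S Xs \<theta> s C1) (glob_eta S Xs \<theta> s C2)"
      using eta_mono by blast
    show "ordered_global_action S (glob_E S Xs \<theta>) (glob_le S X le Xs \<theta>) (glob_Es S Xs \<theta>) (glob_eta S Xs \<theta>)"
      by (rule eta_global)
  qed
qed

end
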